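(* Let $f:\mathbb{R}^d\to\mathbb{R}$ be $\beta$-smooth with minimum value $f^\star$, let $\alpha>0$, $\delta\in(0,\tfrac12)$, and run $T$ steps of SGD $w_{t+1}=w_t-\eta g_t$ (arbitrary $w_1$, $g_t$ a fresh answer of a stochastic gradient oracle with bounded affine noise with parameters $\sigma_0,\sigma_1\ge0$ at $w_t$) with the fixed step size $$\eta=\min\Big\{\frac{1}{4\beta(1+\sigma_1^2\log\frac T\delta)},\ \frac{\alpha}{\sigma_0\sqrt T}\Big\}.$$ Then with probability at least $1-2\delta$: (i) $\displaystyle\frac1T\sum_{t=1}^T\|\nabla f(w_t)\|^2\le\Big(\beta\alpha+\frac{\Delta_1}\alpha\Big)\frac{2\sigma_0}{\sqrt T}+\Big(8\beta\Delta_1(1+4\sigma_1^2)\log\tfrac T\delta+24\sigma_1^2\beta^2\alpha^2\log\tfrac1\delta+15\sigma_0^2\log\tfrac1\delta\Big)\frac1T$; (ii) $f(w_t)-f^\star\le F$ for all $1\le t\le T+1$, where $\Delta_1=f(w_1)-f^\star$ and $$F=2\Delta_1+2\beta\alpha^2+3\min\Big\{\frac{\sigma_0^2}{4\beta(1+\sigma_1^2\log\frac T\delta)},\ \frac{\sigma_0\alpha}{\sqrt T}\Big\}\log\tfrac T\delta.$$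
   Context: $\|\cdot\|$ is the Euclidean norm and $\log$ the base-2 logarithm. $\beta$-smooth: $\|\nabla f(x)-\nabla f(y)\|\le\beta\|x-y\|$; $f$ attains its minimum $f^\star$. Oracle: queried at $w$, returns random $g(w)$ with $\mathbb{E}[g(w)\mid w]=\nabla f(w)$ and, with probability one, $\|g(w)-\nabla f(w)\|^2\le\sigma_0^2+\sigma_1^2\|\nabla f(w)\|^2$; in particular $\mathbb{E}[g_t\mid g_1,\dots,g_{t-1}]=\nabla f(w_t)$. *)

theory Defs
  imports "HOL-Probability.Probability"
begin

text \<open>Sigma-algebra generated by the oracle answers g 1, ..., g (t-1)
  (the history before step t). For t = 1 this is the trivial algebra.\<close>
definition hist_alg :: "'m measure \<Rightarrow> (nat \<Rightarrow> 'm \<Rightarrow> 'a::euclidean_space) \<Rightarrow> nat \<Rightarrow> 'm measure" where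
  "hist_alg M g t = vimage_algebra (space M) (\<lambda>\<omega>. \<lambda>i\<in>{1..<t}. g i \<omega>) (PiM {1..<t} (\<lambda>_. borel))"

text \<open>Step size of the theorem. When sigma0 = 0 the second term is +infinity,
  so the minimum is the first term.\<close>
definition sgd_eta :: "real \<Rightarrow> real \<Rightarrow> real \<Rightarrow> real \<Rightarrow> real \<Rightarrow> nat \<Rightarrow> real" where
  "sgd_eta \<beta> \<sigma>0 \<sigma>1 \<alpha> \<delta> T =
     (if \<sigma>0 = 0 then 1 / (4 * \<beta> * (1 + \<sigma>1\<^sup>2 * log 2 (real T / \<delta>)))
      else min (1 / (4 * \<beta> * (1 + \<sigma>1\<^sup>2 * log 2 (real T / \<delta>)))) (\<alpha> / (\<sigma>0 * sqrt (real T))))"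

end

theory Submission
  imports Defs
begin


lemma descent:
  fixes f :: "'a::euclidean_space \<Rightarrow> real"
  assumes grad: "\<And>x. (f has_derivative (\<lambda>h. f' x \<bullet> h)) (at x)"
    and smooth: "\<And>x y. norm (f' x - f' y) \<le> \<beta> * norm (x - y)" and b: "\<beta> \<ge> 0"
  shows "f y \<le> f x + f' x \<bullet> (y - x) + \<beta>/2 * (norm (y - x))\<^sup>2"
proof -
  define d where "d = y - x"
  define \<psi> where "\<psi> s = f (x + s *\<^sub>R d) - s * (f' x \<bullet> d) - \<beta>/2 * s\<^sup>2 * (norm d)\<^sup>2" for s
  have D: "(\<psi> has_real_derivative (f' (x + s *\<^sub>R d) \<bullet> d - f' x \<bullet> d - \<beta> * s * (norm d)\<^sup>2)) (at s)" for s
  proof -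
    have "((\<lambda>s. f (x + s *\<^sub>R d)) has_derivative (\<lambda>h. f' (x + s *\<^sub>R d) \<bullet> (h *\<^sub>R d))) (at s)"
      by (rule has_derivative_compose[OF _ grad]) (auto intro!: derivative_eq_intros)
    moreover have "(\<lambda>h. f' (x + s *\<^sub>R d) \<bullet> (h *\<^sub>R d)) = (\<lambda>h. h * (f' (x + s *\<^sub>R d) \<bullet> d))"
      by auto
    ultimately have "((\<lambda>s. f (x + s *\<^sub>R d)) has_real_derivative (f' (x + s *\<^sub>R d) \<bullet> d)) (at s)"
      by (simp add: has_field_derivative_def mult.commute[of _ "f' (x + s *\<^sub>R d) \<bullet> d"] mult_commute_abs)
    then show ?thesis unfolding \<psi>_def
      by (auto intro!: derivative_eq_intros simp: power2_eq_square algebra_simps)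
  qed
  have "\<psi> 1 \<le> \<psi> 0"
  proof (rule DERIV_nonpos_imp_nonincreasing[of 0 1 \<psi>])
    fix s :: real assume s: "0 \<le> s" "s \<le> 1"
    have "f' (x + s *\<^sub>R d) \<bullet> d - f' x \<bullet> d = (f' (x + s *\<^sub>R d) - f' x) \<bullet> d"
      by (simp add: inner_diff_left)
    also have "\<dots> \<le> norm (f' (x + s *\<^sub>R d) - f' x) * norm d"
      by (rule norm_cauchy_schwarz)
    also have "\<dots> \<le> (\<beta> * norm (s *\<^sub>R d)) * norm d"
      using smooth[of "x + s *\<^sub>R d" x] by (intro mult_right_mono) auto
    also have "\<dots> = \<beta> * s * (norm d)\<^sup>2" using s by (simp add: power2_eq_square)
    finally show "\<exists>y. (\<psi> has_real_derivative y) (at s) \<and> y \<le> 0"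
      using D[of s] by (intro exI[of _ "f' (x + s *\<^sub>R d) \<bullet> d - f' x \<bullet> d - \<beta> * s * (norm d)\<^sup>2"]) auto
  qed simp
  then show ?thesis by (simp add: \<psi>_def d_def)
qed

lemma grad_bound:
  fixes f :: "'a::euclidean_space \<Rightarrow> real"
  assumes grad: "\<And>x. (f has_derivative (\<lambda>h. f' x \<bullet> h)) (at x)"
    and smooth: "\<And>x y. norm (f' x - f' y) \<le> \<beta> * norm (x - y)" and b: "\<beta> > 0"
    and min_le: "\<And>x. fstar \<le> f x"
  shows "(norm (f' x))\<^sup>2 \<le> 2 * \<beta> * (f x - fstar)"
proof -
  define y where "y = x - (1/\<beta>) *\<^sub>R f' x"
  have "f y \<le> f x + f' x \<bullet> (y - x) + \<beta>/2 * (norm (y - x))\<^sup>2"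
    by (rule descent[OF grad smooth]) (use b in auto)
  also have "\<dots> = f x - (norm (f' x))\<^sup>2 / (2*\<beta>)"
    using b by (simp add: y_def power2_eq_square inner_commute field_simps flip: power2_norm_eq_inner)
  finally have "f y \<le> f x - (norm (f' x))\<^sup>2 / (2*\<beta>)" .
  moreover have "fstar \<le> f y" by (rule min_le)
  ultimately have "(norm (f' x))\<^sup>2 / (2*\<beta>) \<le> f x - fstar" by linarith
  then show ?thesis using b by (simp add: field_simps)
qed

lemma exp_hoeff:
  fixes x c l :: real
  assumes "\<bar>x\<bar> \<le> c" "0 < c" "0 \<le> l"
  shows "exp (l * x) \<le> cosh (l * c) + x / c * sinh (l * c)"
proof -
  define t where "t = (c + x) / (2 * c)"
  have t: "0 \<le> t" "t \<le> 1" using assms by (auto simp: t_def field_simps)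
  have "exp (l * ((1 - t) * (-c) + t * c)) \<le> (1 - t) * exp (l * (-c)) + t * exp (l * c)"
    using convex_onD[OF convex_on_exp[OF assms(3)], of t "-c" c] t by auto
  moreover have "(1 - t) * (-c) + t * c = x" using assms by (simp add: t_def field_simps)
  moreover have "(1 - t) * exp (l * (-c)) + t * exp (l * c) = cosh (l * c) + x / c * sinh (l * c)"
    using assms by (simp add: t_def cosh_def sinh_def field_simps)
  ultimately show ?thesis by simp
qed

lemma cosh_le_exp_sq:
  fixes y :: real assumes "0 \<le> y"
  shows "cosh y \<le> exp (y\<^sup>2 / 2)"
proof -
  have "-(2*y) * (1/2) + ln (1 + (1/2) * (exp (2*y) - 1)) \<le> (2*y)\<^sup>2 / 8"
    using Hoeffdings_lemma_aux[of "2*y" "1/2"] assms by simp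
  moreover have "1 + (1/2) * (exp (2*y) - 1) = exp y * cosh y"
    by (simp add: cosh_def field_simps exp_add[symmetric] exp_minus)
  moreover have "cosh y > 0" by (simp add: cosh_def add_pos_pos)
  ultimately have "ln (cosh y) \<le> y\<^sup>2/2"
    by (simp add: ln_mult power2_eq_square)
  then show ?thesis
    by (metis \<open>cosh y > 0\<close> exp_le_cancel_iff exp_ln)
qed




locale sgd =
  fixes M :: "'m measure"
    and f :: "'a::euclidean_space \<Rightarrow> real" and f' :: "'a \<Rightarrow> 'a"
    and fstar \<beta> \<alpha> \<delta> \<sigma>0 \<sigma>1 :: real and T :: nat
    and w1 :: 'a and w g :: "nat \<Rightarrow> 'm \<Rightarrow> 'a"
  assumes M: "prob_space M"
    and grad: "\<And>x. (f has_derivative (\<lambda>h. f' x \<bullet> h)) (at x)"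
    and bpos: "\<beta> > 0"
    and smooth: "\<And>x y. norm (f' x - f' y) \<le> \<beta> * norm (x - y)"
    and min_le: "\<And>x. fstar \<le> f x"
    and apos: "\<alpha> > 0" and dpos: "0 < \<delta>" and dhalf: "\<delta> < 1/2" and T1: "T \<ge> 1"
    and s0: "\<sigma>0 \<ge> 0" and s1: "\<sigma>1 \<ge> 0"
    and init: "\<And>\<omega>. w 1 \<omega> = w1"
    and step: "\<And>t \<omega>. t \<ge> 1 \<Longrightarrow>
                 w (Suc t) \<omega> = w t \<omega> - sgd_eta \<beta> \<sigma>0 \<sigma>1 \<alpha> \<delta> T *\<^sub>R g t \<omega>"
    and meas: "\<And>t. g t \<in> borel_measurable M"
    and unbiased: "\<And>t b. 1 \<le> t \<Longrightarrow> t \<le> T \<Longrightarrow> b \<in> Basis \<Longrightarrow>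
        AE \<omega> in M. real_cond_exp M (hist_alg M g t) (\<lambda>\<omega>. g t \<omega> \<bullet> b) \<omega> = f' (w t \<omega>) \<bullet> b"
    and noise: "\<And>t. 1 \<le> t \<Longrightarrow> t \<le> T \<Longrightarrow>
        AE \<omega> in M. (norm (g t \<omega> - f' (w t \<omega>)))\<^sup>2 \<le> \<sigma>0\<^sup>2 + \<sigma>1\<^sup>2 * (norm (f' (w t \<omega>)))\<^sup>2"
begin

sublocale prob_space M by (rule M)

definition "eta = sgd_eta \<beta> \<sigma>0 \<sigma>1 \<alpha> \<delta> T"
definition "LL = log 2 (real T / \<delta>)"
definition "AA = 4 * \<beta> * (1 + \<sigma>1\<^sup>2 * LL)"
definition "mm = min (\<sigma>0\<^sup>2 / (4 * \<beta> * (1 + \<sigma>1\<^sup>2 * LL))) (\<sigma>0 * \<alpha> / sqrt (real T))"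
definition "D1 = f w1 - fstar"
definition "FF = 2 * D1 + 2 * \<beta> * \<alpha>\<^sup>2 + 3 * mm * LL"
definition "KK = \<sigma>0\<^sup>2 + 2 * \<beta> * FF * \<sigma>1\<^sup>2"

lemma D1_nonneg: "D1 \<ge> 0" using min_le[of w1] by (simp add: D1_def)

lemma LL_ge1: "LL \<ge> 1"
proof -
  have "real T / \<delta> \<ge> 2" using T1 dpos dhalf
    by (simp add: field_simps)
  then show ?thesis unfolding LL_def
    by (subst le_log_iff) auto
qed

lemma ln_le_LL: "ln (real T / \<delta>) \<le> LL"
proof -
  have x: "real T / \<delta> \<ge> 1" using T1 dpos dhalf by (simp add: field_simps)
  have "ln (real T / \<delta>) \<le> ln (real T / \<delta>) / ln 2"
    using x ln_2_less_1 ln_ge_zero[OF x] by (simp add: field_simps mult_left_le_one_le)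
  then show ?thesis unfolding LL_def log_def by simp
qed

definition "ll = log 2 (1 / \<delta>)"

lemma ll_nonneg: "ll \<ge> 0" using dpos dhalf unfolding ll_def by simp

lemma ll_le_LL: "ll \<le> LL"
  unfolding ll_def LL_def using T1 dpos by (subst log_le_cancel_iff) (auto intro: divide_right_mono)

lemma ln_le_ll: "ln (1 / \<delta>) \<le> ll"
proof -
  have x: "1 / \<delta> \<ge> 1" using dpos dhalf by (simp add: field_simps)
  have "ln (1 / \<delta>) \<le> ln (1 / \<delta>) / ln 2"
    using x ln_2_less_1 ln_ge_zero[OF x] by (simp add: field_simps mult_left_le_one_le)
  then show ?thesis unfolding ll_def log_def by simp
qed

lemma AA_pos: "AA > 0" unfolding AA_def using bpos LL_ge1
  by (intro mult_pos_pos) (auto intro!: add_pos_nonneg)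

lemma eta_pos: "eta > 0"
  using AA_pos apos s0 T1 unfolding eta_def sgd_eta_def AA_def[symmetric] LL_def[symmetric] by auto

lemma eta_le_A: "eta \<le> 1 / AA"
  unfolding eta_def sgd_eta_def AA_def[symmetric] LL_def[symmetric] by auto

lemma eta_le_B: "\<sigma>0 > 0 \<Longrightarrow> eta \<le> \<alpha> / (\<sigma>0 * sqrt (real T))"
  unfolding eta_def sgd_eta_def AA_def[symmetric] LL_def[symmetric] by auto

lemma mm_nonneg: "mm \<ge> 0" unfolding mm_def AA_def[symmetric] using AA_pos apos s0
  by (intro min.boundedI divide_nonneg_nonneg mult_nonneg_nonneg) auto

lemma eta_s0_le_mm: "eta * \<sigma>0\<^sup>2 \<le> mm"
proof (cases "\<sigma>0 = 0")
  case True then show ?thesis unfolding mm_def by simp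
next
  case False
  then have s: "\<sigma>0 > 0" using s0 by auto
  have "eta * \<sigma>0\<^sup>2 \<le> \<sigma>0\<^sup>2 / AA" using eta_le_A s AA_pos
    by (metis mult_right_mono times_divide_eq_left zero_le_power2 mult_1)
  moreover have "eta * \<sigma>0\<^sup>2 \<le> \<sigma>0 * \<alpha> / sqrt (real T)"
  proof -
    have "eta * \<sigma>0\<^sup>2 \<le> \<alpha> / (\<sigma>0 * sqrt (real T)) * \<sigma>0\<^sup>2"
      using eta_le_B[OF s] by (intro mult_right_mono) auto
    also have "\<dots> = \<sigma>0 * \<alpha> / sqrt (real T)" using s by (simp add: power2_eq_square field_simps)
    finally show ?thesis .
  qed
  ultimately show ?thesis unfolding mm_def AA_def by simp
qed

lemma eta_sq_T: "eta\<^sup>2 * \<sigma>0\<^sup>2 * real T \<le> \<alpha>\<^sup>2"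
proof (cases "\<sigma>0 = 0")
  case True then show ?thesis by simp
next
  case False
  then have s: "\<sigma>0 > 0" using s0 by auto
  have T0: "sqrt (real T) > 0" using T1 by simp
  have "eta * (\<sigma>0 * sqrt (real T)) \<le> \<alpha>"
    using eta_le_B[OF s] s T0 by (simp add: field_simps)
  then have "(eta * (\<sigma>0 * sqrt (real T)))\<^sup>2 \<le> \<alpha>\<^sup>2"
    using eta_pos s T0 by (intro power_mono) auto
  then show ?thesis by (simp add: power_mult_distrib)
qed

lemma inv_eta: "1 / eta \<le> AA + \<sigma>0 * sqrt (real T) / \<alpha>"
proof (cases "\<sigma>0 = 0")
  case True then show ?thesis
    unfolding eta_def sgd_eta_def AA_def[symmetric] LL_def[symmetric] by simp
next
  case False
  then have s: "\<sigma>0 > 0" using s0 by auto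
  have T0: "sqrt (real T) > 0" using T1 by simp
  have B: "\<sigma>0 * sqrt (real T) / \<alpha> \<ge> 0" using s T0 apos by simp
  have "eta = min (1 / AA) (\<alpha> / (\<sigma>0 * sqrt (real T)))"
    using False unfolding eta_def sgd_eta_def AA_def[symmetric] LL_def[symmetric] by simp
  then have "eta = 1 / AA \<or> eta = \<alpha> / (\<sigma>0 * sqrt (real T))" by (simp add: min_def)
  then show ?thesis
  proof
    assume "eta = 1 / AA" then show ?thesis using B by simp
  next
    assume "eta = \<alpha> / (\<sigma>0 * sqrt (real T))"
    then have "1 / eta = \<sigma>0 * sqrt (real T) / \<alpha>" by simp
    then show ?thesis using AA_pos by simp
  qed
qed

lemma beta_eta1: "\<beta> * eta * (1 + \<sigma>1\<^sup>2) \<le> 1/4"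
proof -
  have "\<beta> * eta * (1 + \<sigma>1\<^sup>2) \<le> \<beta> * (1 / AA) * (1 + \<sigma>1\<^sup>2)"
    using eta_le_A bpos by (intro mult_right_mono mult_left_mono) auto
  also have "\<dots> = (1 + \<sigma>1\<^sup>2) / (4 * (1 + \<sigma>1\<^sup>2 * LL))" unfolding AA_def using bpos by simp
  also have "\<dots> \<le> 1/4"
  proof -
    have h: "1 + \<sigma>1\<^sup>2 \<le> 1 + \<sigma>1\<^sup>2 * LL" using mult_left_mono[OF LL_ge1, of "\<sigma>1\<^sup>2"] by simp
    have "\<sigma>1\<^sup>2 * LL \<ge> 0" using LL_ge1 by simp
    then show ?thesis using h by (simp add: divide_le_eq mult.commute)
  qed
  finally show ?thesis .
qed

lemma beta_eta2: "\<beta> * eta * \<sigma>1\<^sup>2 * LL \<le> 1/4"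
proof -
  have "\<beta> * eta * \<sigma>1\<^sup>2 * LL \<le> \<beta> * (1 / AA) * \<sigma>1\<^sup>2 * LL"
    using eta_le_A bpos LL_ge1 by (intro mult_right_mono mult_left_mono) auto
  also have "\<dots> = (\<sigma>1\<^sup>2 * LL) / (4 * (1 + \<sigma>1\<^sup>2 * LL))" unfolding AA_def using bpos by simp
  also have "\<dots> \<le> 1/4"
  proof -
    have "\<sigma>1\<^sup>2 * LL \<ge> 0" using LL_ge1 by simp
    then show ?thesis by (simp add: divide_le_eq)
  qed
  finally show ?thesis .
qed

lemma beta_eta: "\<beta> * eta \<le> 1/4"
proof -
  have "\<beta> * eta \<ge> 0" using bpos eta_pos by simp
  then have "\<beta> * eta \<le> \<beta> * eta * (1 + \<sigma>1\<^sup>2)" using mult_left_mono[of 1 "1 + \<sigma>1\<^sup>2" "\<beta> * eta"] by simp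
  then show ?thesis using beta_eta1 by linarith
qed

lemma FF_pos: "FF > 0"
proof -
  have "2 * \<beta> * \<alpha>\<^sup>2 > 0" using bpos apos by simp
  moreover have "3 * mm * LL \<ge> 0" using mm_nonneg LL_ge1 by simp
  ultimately show ?thesis unfolding FF_def using D1_nonneg by linarith
qed

lemma KK_nonneg: "KK \<ge> 0" unfolding KK_def using FF_pos bpos by auto

end



context sgd begin

definition "Fa n = hist_alg M g n"
definition "Dl t \<omega> = f (w t \<omega>) - fstar"
definition "grd t \<omega> = f' (w t \<omega>)"
definition "GG t \<omega> = (norm (grd t \<omega>))\<^sup>2"
definition "xi t \<omega> = g t \<omega> - grd t \<omega>"
primrec II :: "nat \<Rightarrow> 'm \<Rightarrow> real" where
  "II 0 \<omega> = 1" | "II (Suc t) \<omega> = II t \<omega> * (if Dl (Suc t) \<omega> \<le> FF then 1 else 0)"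
definition "Mt t \<omega> = -(eta * (1 - \<beta> * eta)) * (grd t \<omega> \<bullet> xi t \<omega>)"
definition "Mp t \<omega> = II t \<omega> * Mt t \<omega>"
definition "Y lam t \<omega> = lam * Mp t \<omega> - lam\<^sup>2 / 2 * eta\<^sup>2 * KK * (II t \<omega> * GG t \<omega>)"
definition "S lam n \<omega> = (\<Sum>t\<in>{1..<n}. Y lam t \<omega>)"
definition "noiseok \<omega> = (\<forall>t\<in>{1..T}. (norm (xi t \<omega>))\<^sup>2 \<le> \<sigma>0\<^sup>2 + \<sigma>1\<^sup>2 * GG t \<omega>)"

lemma II_cases: "II t \<omega> = (if \<forall>s\<in>{1..t}. Dl s \<omega> \<le> FF then 1 else 0)"
proof (induction t)
  case 0 then show ?case by simp
next
  case (Suc t)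
  have "{1..Suc t} = insert (Suc t) {1..t}" by auto
  then show ?case using Suc by auto
qed

lemma II_01: "II t \<omega> = 0 \<or> II t \<omega> = 1" by (simp add: II_cases)

lemma f'_cont: "continuous_on UNIV f'"
proof -
  have "isCont f' x" for x
  proof (rule continuous_at_eps_delta[THEN iffD2], intro allI impI)
    fix e :: real assume e: "e > 0"
    show "\<exists>d>0. \<forall>y. dist y x < d \<longrightarrow> dist (f' y) (f' x) < e"
    proof (intro exI[of _ "e / \<beta>"] conjI allI impI)
      show "e / \<beta> > 0" using e bpos by simp
      fix y assume "dist y x < e / \<beta>"
      then have "\<beta> * dist y x < e" using bpos by (simp add: field_simps)
      moreover have "dist (f' y) (f' x) \<le> \<beta> * dist y x"
        using smooth[of y x] by (simp add: dist_norm)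
      ultimately show "dist (f' y) (f' x) < e" by simp
    qed
  qed
  then show ?thesis by (simp add: continuous_at_imp_continuous_on)
qed

lemma f_cont: "continuous_on UNIV f"
  using grad has_derivative_continuous continuous_at_imp_continuous_on by blast

lemma f'_borel[measurable]: "f' \<in> borel_measurable borel"
  by (rule borel_measurable_continuous_onI[OF f'_cont])
lemma f_borel[measurable]: "f \<in> borel_measurable borel"
  by (rule borel_measurable_continuous_onI[OF f_cont])

lemma H_meas: "(\<lambda>\<omega>. \<lambda>i\<in>{1..<n}. g i \<omega>) \<in> measurable M (PiM {1..<n} (\<lambda>_. borel))"
  by (rule measurable_restrict) (rule meas)

lemma subalg: "subalgebra M (Fa n)"
  unfolding subalgebra_def Fa_def hist_alg_def using sets_image_in_sets[OF refl H_meas] by simp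

lemma sfs: "sigma_finite_subalgebra M (Fa n)"
proof (rule sigma_finite_subalgebra.intro)
  show "subalgebra M (Fa n)" by (rule subalg)
  have "prob_space (restr_to_subalg M (Fa n))"
    by (rule prob_space_restr_to_subalg[OF subalg M])
  then show "sigma_finite_measure (restr_to_subalg M (Fa n))"
    by (simp add: prob_space_imp_sigma_finite)
qed

lemma g_meas_F: "1 \<le> i \<Longrightarrow> i < n \<Longrightarrow> g i \<in> borel_measurable (Fa n)"
proof -
  assume i: "1 \<le> i" "i < n"
  have H: "(\<lambda>\<omega>. \<lambda>i\<in>{1..<n}. g i \<omega>) \<in> measurable (Fa n) (PiM {1..<n} (\<lambda>_. borel))"
    unfolding Fa_def hist_alg_def by (rule measurable_vimage_algebra1) (auto simp: space_PiM)
  have "(\<lambda>\<omega>. (\<lambda>i\<in>{1..<n}. g i \<omega>) i) \<in> borel_measurable (Fa n)"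
    using measurable_compose[OF H measurable_component_singleton[of i "{1..<n}" "\<lambda>_. borel"]] i
    by simp
  then show ?thesis using i by simp
qed

lemma w_Suc: "1 \<le> t \<Longrightarrow> w (Suc t) = (\<lambda>\<omega>. w t \<omega> - eta *\<^sub>R g t \<omega>)"
  using step unfolding eta_def by auto

lemma w_meas_F: "1 \<le> i \<Longrightarrow> i \<le> n \<Longrightarrow> w i \<in> borel_measurable (Fa n)"
proof (induction i)
  case 0 then show ?case by simp
next
  case (Suc i)
  show ?case
  proof (cases "i = 0")
    case True
    then show ?thesis using init by simp
  next
    case False
    then have [measurable]: "w i \<in> borel_measurable (Fa n)" "g i \<in> borel_measurable (Fa n)"
      using Suc g_meas_F by auto
    show ?thesis using False by (simp add: w_Suc)
  qed
qed

lemma w_meas: "1 \<le> i \<Longrightarrow> w i \<in> borel_measurable M"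
  using measurable_from_subalg[OF subalg w_meas_F[of i i]] by simp

context
  fixes N :: "'m measure" and n :: nat
  assumes wm: "\<And>i. 1 \<le> i \<Longrightarrow> i \<le> n \<Longrightarrow> w i \<in> borel_measurable N"
    and gm: "\<And>i. 1 \<le> i \<Longrightarrow> i < n \<Longrightarrow> g i \<in> borel_measurable N"
begin

lemma Dl_m: "1 \<le> t \<Longrightarrow> t \<le> n \<Longrightarrow> Dl t \<in> borel_measurable N"
proof -
  assume "1 \<le> t" "t \<le> n"
  then have [measurable]: "w t \<in> borel_measurable N" by (rule wm)
  show ?thesis unfolding Dl_def by measurable
qed

lemma grd_m: "1 \<le> t \<Longrightarrow> t \<le> n \<Longrightarrow> grd t \<in> borel_measurable N"
proof -
  assume "1 \<le> t" "t \<le> n"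
  then have [measurable]: "w t \<in> borel_measurable N" by (rule wm)
  show ?thesis unfolding grd_def by measurable
qed

lemma GG_m: "1 \<le> t \<Longrightarrow> t \<le> n \<Longrightarrow> GG t \<in> borel_measurable N"
proof -
  assume "1 \<le> t" "t \<le> n"
  then have [measurable]: "grd t \<in> borel_measurable N" by (rule grd_m)
  show ?thesis unfolding GG_def by measurable
qed

lemma II_m: "t \<le> n \<Longrightarrow> II t \<in> borel_measurable N"
proof (induction t)
  case 0 then show ?case by simp
next
  case (Suc t)
  then have [measurable]: "II t \<in> borel_measurable N" "Dl (Suc t) \<in> borel_measurable N"
    using Dl_m by auto
  show ?case by simp
qed

lemma xi_m: "1 \<le> t \<Longrightarrow> t < n \<Longrightarrow> xi t \<in> borel_measurable N"
proof -
  assume "1 \<le> t" "t < n"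
  then have [measurable]: "grd t \<in> borel_measurable N" "g t \<in> borel_measurable N"
    using grd_m gm by auto
  show ?thesis unfolding xi_def by measurable
qed

lemma Mt_m: "1 \<le> t \<Longrightarrow> t < n \<Longrightarrow> Mt t \<in> borel_measurable N"
proof -
  assume "1 \<le> t" "t < n"
  then have [measurable]: "grd t \<in> borel_measurable N" "xi t \<in> borel_measurable N"
    using grd_m xi_m by auto
  show ?thesis unfolding Mt_def by measurable
qed

lemma Mp_m: "1 \<le> t \<Longrightarrow> t < n \<Longrightarrow> Mp t \<in> borel_measurable N"
proof -
  assume "1 \<le> t" "t < n"
  then have [measurable]: "II t \<in> borel_measurable N" "Mt t \<in> borel_measurable N"
    using II_m Mt_m by auto
  show ?thesis unfolding Mp_def by measurable
qed

lemma Y_m: "1 \<le> t \<Longrightarrow> t < n \<Longrightarrow> Y lam t \<in> borel_measurable N"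
proof -
  assume "1 \<le> t" "t < n"
  then have [measurable]: "II t \<in> borel_measurable N" "Mp t \<in> borel_measurable N" "GG t \<in> borel_measurable N"
    using II_m Mp_m GG_m by auto
  show ?thesis unfolding Y_def by measurable
qed

lemma S_m: "S lam n \<in> borel_measurable N"
  unfolding S_def by (rule borel_measurable_sum) (use Y_m in auto)

end

lemma wM: "1 \<le> i \<Longrightarrow> i \<le> n \<Longrightarrow> w i \<in> borel_measurable M" using w_meas by auto
lemma gM: "1 \<le> i \<Longrightarrow> i < n \<Longrightarrow> g i \<in> borel_measurable M" using meas by auto

lemmas Dl_M = Dl_m[OF wM gM] and grd_M = grd_m[OF wM gM] and GG_M = GG_m[OF wM gM]
  and II_M = II_m[OF wM gM] and xi_M = xi_m[OF wM gM] and Mt_M = Mt_m[OF wM gM]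
  and Mp_M = Mp_m[OF wM gM] and Y_M = Y_m[OF wM gM] and S_M = S_m[OF wM gM]

lemmas Dl_F = Dl_m[OF w_meas_F g_meas_F] and grd_F = grd_m[OF w_meas_F g_meas_F]
  and GG_F = GG_m[OF w_meas_F g_meas_F]
  and II_F = II_m[OF w_meas_F g_meas_F] and xi_F = xi_m[OF w_meas_F g_meas_F]
  and Mp_F = Mp_m[OF w_meas_F g_meas_F] and Y_F = Y_m[OF w_meas_F g_meas_F]
  and S_F = S_m[OF w_meas_F g_meas_F]

lemma noiseok_sets: "{\<omega> \<in> space M. noiseok \<omega>} \<in> sets M"
proof -
  have [measurable]: "xi t \<in> borel_measurable M" "GG t \<in> borel_measurable M" if "t \<in> {1..T}" for t
    using that xi_M[where n="Suc t" and t=t] GG_M[where n=t and t=t] by auto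
  show ?thesis unfolding noiseok_def by measurable
qed

end



lemma sinh_le_exp:
  fixes y :: real assumes "0 \<le> y"
  shows "sinh y \<le> y * exp y" "0 \<le> sinh y"
proof -
  have "1 + (-2*y) \<le> exp (-2*y)" by (rule exp_ge_add_one_self)
  then have "exp y * (1 - 2*y) \<le> exp y * exp (-2*y)" by (intro mult_left_mono) auto
  also have "exp y * exp (-2*y) = exp (-y)" by (simp add: exp_add[symmetric])
  finally have "exp y - exp (-y) \<le> 2 * y * exp y" by (simp add: algebra_simps)
  then show "sinh y \<le> y * exp y" by (simp add: sinh_def)
  have "exp (-y) \<le> exp y" using assms by simp
  then show "0 \<le> sinh y" by (simp add: sinh_def)
qed

context sgd begin

definition "RR = sqrt (2 * \<beta> * FF)"
definition "QQ = sqrt (\<sigma>0\<^sup>2 + \<sigma>1\<^sup>2 * (2 * \<beta> * FF))"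
definition "CC = eta * RR * QQ"
definition "cc t \<omega> = sqrt (eta\<^sup>2 * KK * (II t \<omega> * GG t \<omega>))"
definition "Cmax = sqrt (eta\<^sup>2 * KK * (2 * \<beta> * FF))"
definition "phi lam t \<omega> = exp (-(lam\<^sup>2 / 2) * (cc t \<omega>)\<^sup>2) * (sinh (lam * cc t \<omega>) / cc t \<omega>)"

lemma RR_nonneg: "RR \<ge> 0" unfolding RR_def using bpos FF_pos by simp
lemma QQ_nonneg: "QQ \<ge> 0" unfolding QQ_def using bpos FF_pos by simp
lemma CC_nonneg: "CC \<ge> 0" unfolding CC_def using RR_nonneg QQ_nonneg eta_pos by simp

lemma GG_le: "GG t \<omega> \<le> 2 * \<beta> * Dl t \<omega>"
  unfolding GG_def grd_def Dl_def using grad_bound[OF grad smooth bpos min_le] .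

lemma GG_nonneg: "GG t \<omega> \<ge> 0" unfolding GG_def by simp

lemma II_Dl: "II t \<omega> = 1 \<Longrightarrow> s \<in> {1..t} \<Longrightarrow> Dl s \<omega> \<le> FF"
  by (auto simp: II_cases split: if_splits)

lemma II_one: "(\<And>s. s \<in> {1..t} \<Longrightarrow> Dl s \<omega> \<le> FF) \<Longrightarrow> II t \<omega> = 1"
  by (auto simp: II_cases)

lemma G_le_FF: "1 \<le> t \<Longrightarrow> II t \<omega> = 1 \<Longrightarrow> GG t \<omega> \<le> 2 * \<beta> * FF"
proof -
  assume a: "1 \<le> t" "II t \<omega> = 1"
  have "Dl t \<omega> \<le> FF" using II_Dl[of t \<omega> t] a by auto
  then have "2 * \<beta> * Dl t \<omega> \<le> 2 * \<beta> * FF" using bpos by (intro mult_left_mono) auto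
  then show ?thesis using GG_le[of t \<omega>] by linarith
qed

lemma IG_le: "1 \<le> t \<Longrightarrow> II t \<omega> * GG t \<omega> \<le> 2 * \<beta> * FF"
  using II_01[of t \<omega>] G_le_FF[of t \<omega>] FF_pos bpos by auto

lemma IG_nonneg: "II t \<omega> * GG t \<omega> \<ge> 0"
  using II_01[of t \<omega>] GG_nonneg[of t \<omega>] by auto

lemma grd_le: "1 \<le> t \<Longrightarrow> II t \<omega> = 1 \<Longrightarrow> norm (grd t \<omega>) \<le> RR"
  unfolding RR_def using G_le_FF[of t \<omega>] by (intro real_le_rsqrt) (simp add: GG_def)

lemma xi_le: "noiseok \<omega> \<Longrightarrow> t \<in> {1..T} \<Longrightarrow> II t \<omega> = 1 \<Longrightarrow> norm (xi t \<omega>) \<le> QQ"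
proof -
  assume a: "noiseok \<omega>" "t \<in> {1..T}" "II t \<omega> = 1"
  then have "(norm (xi t \<omega>))\<^sup>2 \<le> \<sigma>0\<^sup>2 + \<sigma>1\<^sup>2 * GG t \<omega>" by (auto simp: noiseok_def)
  also have "\<dots> \<le> \<sigma>0\<^sup>2 + \<sigma>1\<^sup>2 * (2 * \<beta> * FF)"
    using G_le_FF[of t \<omega>] a by (intro add_left_mono mult_left_mono) auto
  finally show ?thesis unfolding QQ_def by (rule real_le_rsqrt)
qed

lemma one_minus: "0 \<le> 1 - \<beta> * eta" "1 - \<beta> * eta \<le> 1"
  using beta_eta bpos eta_pos by auto

lemma Mt_abs: "\<bar>Mt t \<omega>\<bar> \<le> eta * (norm (grd t \<omega>) * norm (xi t \<omega>))"
proof -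
  have "\<bar>Mt t \<omega>\<bar> = eta * (1 - \<beta> * eta) * \<bar>grd t \<omega> \<bullet> xi t \<omega>\<bar>"
    unfolding Mt_def using eta_pos one_minus by (simp add: abs_mult)
  also have "\<dots> \<le> eta * 1 * \<bar>grd t \<omega> \<bullet> xi t \<omega>\<bar>"
    using eta_pos one_minus by (intro mult_right_mono mult_left_mono) auto
  also have "\<dots> \<le> eta * (norm (grd t \<omega>) * norm (xi t \<omega>))"
    using eta_pos Cauchy_Schwarz_ineq2 by (simp add: mult_left_mono)
  finally show ?thesis .
qed

lemma Mp_abs: "noiseok \<omega> \<Longrightarrow> t \<in> {1..T} \<Longrightarrow> \<bar>Mp t \<omega>\<bar> \<le> CC"
proof -
  assume a: "noiseok \<omega>" "t \<in> {1..T}"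
  have CC0: "CC \<ge> 0" by (rule CC_nonneg)
  show ?thesis
  proof (cases "II t \<omega> = 1")
    case True
    have "\<bar>Mp t \<omega>\<bar> = \<bar>Mt t \<omega>\<bar>" by (simp add: Mp_def True)
    also have "\<dots> \<le> eta * (norm (grd t \<omega>) * norm (xi t \<omega>))" by (rule Mt_abs)
    also have "\<dots> \<le> eta * (RR * QQ)"
      using grd_le[of t \<omega>] xi_le[OF a True] a True eta_pos RR_nonneg QQ_nonneg
      by (intro mult_left_mono mult_mono) auto
    finally show ?thesis by (simp add: CC_def mult.assoc)
  next
    case False
    then have "II t \<omega> = 0" using II_01 by blast
    then show ?thesis using CC0 by (simp add: Mp_def)
  qed
qed

lemma cc_sq: "(cc t \<omega>)\<^sup>2 = eta\<^sup>2 * KK * (II t \<omega> * GG t \<omega>)"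
proof -
  have "0 \<le> eta\<^sup>2 * KK * (II t \<omega> * GG t \<omega>)"
    by (rule mult_nonneg_nonneg) (use KK_nonneg IG_nonneg in auto)
  then show ?thesis unfolding cc_def by simp
qed

lemma cc_nonneg: "cc t \<omega> \<ge> 0"
proof -
  have "0 \<le> eta\<^sup>2 * KK * (II t \<omega> * GG t \<omega>)"
    by (rule mult_nonneg_nonneg) (use KK_nonneg IG_nonneg in auto)
  then show ?thesis unfolding cc_def by simp
qed

lemma cc_le: "1 \<le> t \<Longrightarrow> cc t \<omega> \<le> Cmax"
  unfolding cc_def Cmax_def using IG_le[of t \<omega>] KK_nonneg
  by (intro real_sqrt_le_mono mult_left_mono) auto

lemma Mp_le_cc: "noiseok \<omega> \<Longrightarrow> t \<in> {1..T} \<Longrightarrow> \<bar>Mp t \<omega>\<bar> \<le> cc t \<omega>"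
proof -
  assume a: "noiseok \<omega>" "t \<in> {1..T}"
  have "(Mp t \<omega>)\<^sup>2 \<le> (cc t \<omega>)\<^sup>2"
  proof (cases "II t \<omega> = 1")
    case True
    have "(Mp t \<omega>)\<^sup>2 = (Mt t \<omega>)\<^sup>2" by (simp add: Mp_def True)
    also have "\<dots> \<le> (eta * (norm (grd t \<omega>) * norm (xi t \<omega>)))\<^sup>2"
      using Mt_abs[of t \<omega>] by (metis abs_ge_zero abs_le_square_iff abs_of_nonneg order_trans power2_abs)
    also have "\<dots> = eta\<^sup>2 * (GG t \<omega> * (norm (xi t \<omega>))\<^sup>2)"
      by (simp add: GG_def power_mult_distrib)
    also have "\<dots> \<le> eta\<^sup>2 * (GG t \<omega> * (\<sigma>0\<^sup>2 + \<sigma>1\<^sup>2 * GG t \<omega>))"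
      using a GG_nonneg[of t \<omega>] by (intro mult_left_mono) (auto simp: noiseok_def)
    also have "\<dots> \<le> eta\<^sup>2 * (GG t \<omega> * (\<sigma>0\<^sup>2 + \<sigma>1\<^sup>2 * (2 * \<beta> * FF)))"
      using G_le_FF[of t \<omega>] a True GG_nonneg[of t \<omega>]
      by (intro mult_left_mono add_left_mono) auto
    also have "\<dots> = (cc t \<omega>)\<^sup>2" by (simp add: cc_sq True KK_def algebra_simps)
    finally show ?thesis .
  next
    case False
    then have "II t \<omega> = 0" using II_01 by blast
    then show ?thesis by (simp add: Mp_def)
  qed
  then show ?thesis using cc_nonneg[of t \<omega>] by (metis abs_le_square_iff abs_of_nonneg)
qed

lemma phi_bounds:
  assumes "0 \<le> lam" "1 \<le> t"
  shows "0 \<le> phi lam t \<omega>" "phi lam t \<omega> \<le> lam * exp (lam * Cmax)"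
proof -
  define c where "c = cc t \<omega>"
  have c0: "c \<ge> 0" using cc_nonneg by (simp add: c_def)
  have cm: "c \<le> Cmax" using cc_le[OF assms(2)] by (simp add: c_def)
  have E: "0 < exp (-(lam\<^sup>2 / 2) * c\<^sup>2)" "exp (-(lam\<^sup>2 / 2) * c\<^sup>2) \<le> 1" by auto
  have "0 \<le> sinh (lam * c) / c" "sinh (lam * c) / c \<le> lam * exp (lam * Cmax)"
  proof -
    show "0 \<le> sinh (lam * c) / c" using sinh_le_exp(2)[of "lam * c"] assms c0 by simp
    show "sinh (lam * c) / c \<le> lam * exp (lam * Cmax)"
    proof (cases "c = 0")
      case True then show ?thesis using assms by simp
    next
      case False
      then have cp: "c > 0" using c0 by simp
      have "sinh (lam * c) / c \<le> (lam * c) * exp (lam * c) / c"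
        using sinh_le_exp(1)[of "lam * c"] assms c0 cp by (intro divide_right_mono) auto
      also have "\<dots> = lam * exp (lam * c)" using cp by simp
      also have "\<dots> \<le> lam * exp (lam * Cmax)" using assms cm by (intro mult_left_mono) (auto intro: mult_left_mono)
      finally show ?thesis .
    qed
  qed
  then have q: "0 \<le> sinh (lam * c) / c" "sinh (lam * c) / c \<le> lam * exp (lam * Cmax)" by auto
  have "phi lam t \<omega> = exp (-(lam\<^sup>2 / 2) * c\<^sup>2) * (sinh (lam * c) / c)"
    unfolding phi_def c_def by simp
  moreover have "0 \<le> exp (-(lam\<^sup>2 / 2) * c\<^sup>2) * (sinh (lam * c) / c)"
    by (rule mult_nonneg_nonneg) (use q E in auto)
  moreover have "exp (-(lam\<^sup>2 / 2) * c\<^sup>2) * (sinh (lam * c) / c) \<le> 1 * (sinh (lam * c) / c)"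
    using q E by (intro mult_right_mono) auto
  ultimately show "0 \<le> phi lam t \<omega>" "phi lam t \<omega> \<le> lam * exp (lam * Cmax)"
    using q by auto
qed

lemma expY:
  assumes lam: "0 \<le> lam" and nk: "noiseok \<omega>" and t: "t \<in> {1..T}"
  shows "exp (Y lam t \<omega>) \<le> 1 + Mp t \<omega> * phi lam t \<omega>"
proof -
  define c where "c = cc t \<omega>"
  have c0: "c \<ge> 0" using cc_nonneg by (simp add: c_def)
  have Mc: "\<bar>Mp t \<omega>\<bar> \<le> c" using Mp_le_cc[OF nk t] by (simp add: c_def)
  have Yeq: "Y lam t \<omega> = lam * Mp t \<omega> - lam\<^sup>2 / 2 * c\<^sup>2"
    unfolding Y_def c_def cc_sq by (simp add: mult.assoc)
  show ?thesis
  proof (cases "c = 0")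
    case True
    then have "Mp t \<omega> = 0" using Mc by simp
    then show ?thesis using True Yeq by simp
  next
    case False
    then have cp: "c > 0" using c0 by simp
    define E where "E = exp (-(lam\<^sup>2 / 2) * c\<^sup>2)"
    have E0: "E > 0" by (simp add: E_def)
    have "exp (Y lam t \<omega>) = exp (lam * Mp t \<omega>) * E"
      by (simp add: Yeq E_def exp_add[symmetric] exp_diff)
    also have "\<dots> \<le> (cosh (lam * c) + Mp t \<omega> / c * sinh (lam * c)) * E"
      using exp_hoeff[OF Mc cp lam] E0 by (intro mult_right_mono) auto
    also have "\<dots> = cosh (lam * c) * E + Mp t \<omega> * phi lam t \<omega>"
      by (simp add: phi_def c_def[symmetric] E_def algebra_simps)
    also have "cosh (lam * c) * E \<le> 1"
    proof -
      have "cosh (lam * c) * E \<le> exp ((lam * c)\<^sup>2 / 2) * E"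
        using cosh_le_exp_sq[of "lam * c"] lam c0 E0 by (intro mult_right_mono) auto
      also have "\<dots> = 1" by (simp add: E_def exp_add[symmetric] power_mult_distrib)
      finally show ?thesis .
    qed
    finally show ?thesis by simp
  qed
qed

lemma S_one: "S lam 1 \<omega> = 0" by (simp add: S_def)

lemma S_Suc: "1 \<le> n \<Longrightarrow> S lam (Suc n) \<omega> = S lam n \<omega> + Y lam n \<omega>"
proof -
  assume "1 \<le> n"
  then have "{1..<Suc n} = insert n {1..<n}" by auto
  then show ?thesis by (simp add: S_def add.commute)
qed

lemma Y_le: "0 \<le> lam \<Longrightarrow> Y lam t \<omega> \<le> lam * Mp t \<omega>"
  unfolding Y_def using IG_nonneg[of t \<omega>] KK_nonneg by simp

lemma S_le:
  assumes lam: "0 \<le> lam" and nk: "noiseok \<omega>" and n: "n \<le> Suc T"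
  shows "S lam n \<omega> \<le> real n * (lam * CC)"
proof -
  have CC0: "CC \<ge> 0" by (rule CC_nonneg)
  have "S lam n \<omega> \<le> (\<Sum>t\<in>{1..<n}. lam * CC)"
    unfolding S_def
  proof (rule sum_mono)
    fix t assume "t \<in> {1..<n}"
    then have t: "t \<in> {1..T}" using n by auto
    have "Y lam t \<omega> \<le> lam * Mp t \<omega>" by (rule Y_le[OF lam])
    also have "\<dots> \<le> lam * CC" using Mp_abs[OF nk t] lam by (intro mult_left_mono) auto
    finally show "Y lam t \<omega> \<le> lam * CC" .
  qed
  also have "\<dots> = real (n - 1) * (lam * CC)" by simp
  also have "\<dots> \<le> real n * (lam * CC)" using lam CC0 by (intro mult_right_mono) auto
  finally show ?thesis .
qed

lemma AE_noiseok: "AE \<omega> in M. noiseok \<omega>"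
  unfolding noiseok_def
  by (rule AE_finite_allI) (use noise in \<open>auto simp: xi_def grd_def GG_def\<close>)

lemma sqrt_borel[measurable]: "sqrt \<in> borel_measurable borel"
  by (rule borel_measurable_continuous_onI) (intro continuous_intros)
lemma sinh_borel[measurable]: "(sinh :: real \<Rightarrow> real) \<in> borel_measurable borel"
  by (rule borel_measurable_continuous_onI) (unfold sinh_def, intro continuous_intros)

lemma phi_F: "1 \<le> n \<Longrightarrow> phi lam n \<in> borel_measurable (Fa n)"
proof -
  assume n: "1 \<le> n"
  have [measurable]: "II n \<in> borel_measurable (Fa n)" "GG n \<in> borel_measurable (Fa n)"
    using II_F[of n n] GG_F[of n n] n by auto
  show ?thesis unfolding phi_def cc_def by measurable
qed

end



context sgd begin

lemma orth:
  assumes n: "1 \<le> n" "n \<le> T" and Zm: "Z \<in> borel_measurable (Fa n)"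
    and ZB: "AE \<omega> in M. \<bar>Z \<omega>\<bar> \<le> B"
  shows "integral\<^sup>L M (\<lambda>\<omega>. Z \<omega> * Mp n \<omega>) = 0"
proof -
  interpret F: sigma_finite_subalgebra M "Fa n" by (rule sfs)
  have [measurable]: "Z \<in> borel_measurable (Fa n)" by (rule Zm)
  have [measurable]: "II n \<in> borel_measurable (Fa n)" using II_F[of n n] by simp
  have [measurable]: "grd n \<in> borel_measurable (Fa n)" using grd_F[of n n] n by simp
  have [measurable]: "g n \<in> borel_measurable M" by (rule meas)
  have [measurable]: "grd n \<in> borel_measurable M" using grd_M[where n=n and t=n] n by simp
  have [measurable]: "Mp n \<in> borel_measurable M" using Mp_M[where n="Suc n" and t=n] n by simp
  define k where "k = -(eta * (1 - \<beta> * eta))"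
  define Zb where "Zb b \<omega> = Z \<omega> * II n \<omega> * (grd n \<omega> \<bullet> b)" for b \<omega>
  have Zbm[measurable]: "Zb b \<in> borel_measurable (Fa n)" for b unfolding Zb_def by measurable
  have ZbM[measurable]: "Zb b \<in> borel_measurable M" for b
    using measurable_from_subalg[OF subalg Zbm] .
  have pw: "\<bar>Zb b \<omega> * (grd n \<omega> \<bullet> b)\<bar> \<le> \<bar>B\<bar> * RR * RR \<and> \<bar>Zb b \<omega> * (g n \<omega> \<bullet> b)\<bar> \<le> \<bar>B\<bar> * RR * (RR + QQ)"
    if b: "b \<in> Basis" and nk: "noiseok \<omega>" and zb: "\<bar>Z \<omega>\<bar> \<le> B" for b \<omega>
  proof (cases "II n \<omega> = 1")
    case True
    have R0: "RR \<ge> 0" by (rule RR_nonneg)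
    have a1: "\<bar>grd n \<omega> \<bullet> b\<bar> \<le> RR"
      using Basis_le_norm[OF b, of "grd n \<omega>"] grd_le[OF n(1) True] by linarith
    have g1: "\<bar>g n \<omega> \<bullet> b\<bar> \<le> norm (g n \<omega>)" by (rule Basis_le_norm[OF b])
    have gg: "g n \<omega> = grd n \<omega> + xi n \<omega>" by (simp add: xi_def)
    have g2: "norm (g n \<omega>) \<le> norm (grd n \<omega>) + norm (xi n \<omega>)" unfolding gg by (rule norm_triangle_ineq)
    have g3: "norm (grd n \<omega>) \<le> RR" by (rule grd_le[OF n(1) True])
    have g4: "norm (xi n \<omega>) \<le> QQ" using xi_le[OF nk _ True] n by auto
    have a2: "\<bar>g n \<omega> \<bullet> b\<bar> \<le> RR + QQ" using g1 g2 g3 g4 by linarith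
    have zb': "\<bar>Z \<omega>\<bar> \<le> \<bar>B\<bar>" using zb by linarith
    have "\<bar>Zb b \<omega> * (grd n \<omega> \<bullet> b)\<bar> = \<bar>Z \<omega>\<bar> * \<bar>grd n \<omega> \<bullet> b\<bar> * \<bar>grd n \<omega> \<bullet> b\<bar>"
      by (simp add: Zb_def True abs_mult)
    also have "\<dots> \<le> \<bar>B\<bar> * RR * RR" using zb' a1 by (intro mult_mono) auto
    finally have c1: "\<bar>Zb b \<omega> * (grd n \<omega> \<bullet> b)\<bar> \<le> \<bar>B\<bar> * RR * RR" .
    have "\<bar>Zb b \<omega> * (g n \<omega> \<bullet> b)\<bar> = \<bar>Z \<omega>\<bar> * \<bar>grd n \<omega> \<bullet> b\<bar> * \<bar>g n \<omega> \<bullet> b\<bar>"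
      by (simp add: Zb_def True abs_mult)
    also have "\<dots> \<le> \<bar>B\<bar> * RR * (RR + QQ)" using zb' a1 a2 by (intro mult_mono) auto
    finally show ?thesis using c1 by simp
  next
    case False
    then have "II n \<omega> = 0" using II_01 by blast
    then show ?thesis unfolding Zb_def using RR_nonneg QQ_nonneg by simp
  qed
  have AEpw: "AE \<omega> in M. \<bar>Zb b \<omega> * (grd n \<omega> \<bullet> b)\<bar> \<le> \<bar>B\<bar> * RR * RR \<and> \<bar>Zb b \<omega> * (g n \<omega> \<bullet> b)\<bar> \<le> \<bar>B\<bar> * RR * (RR + QQ)"
    if b: "b \<in> Basis" for b
    using AE_noiseok ZB by eventually_elim (use pw[OF b] in auto)
  have int1: "integrable M (\<lambda>\<omega>. Zb b \<omega> * (grd n \<omega> \<bullet> b))" if b: "b \<in> Basis" for b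
    by (rule integrable_const_bound[where B="\<bar>B\<bar> * RR * RR"]) (use AEpw[OF b] in \<open>auto elim: AE_mp\<close>)
  have int2: "integrable M (\<lambda>\<omega>. Zb b \<omega> * (g n \<omega> \<bullet> b))" if b: "b \<in> Basis" for b
    by (rule integrable_const_bound[where B="\<bar>B\<bar> * RR * (RR + QQ)"]) (use AEpw[OF b] in \<open>auto elim: AE_mp\<close>)
  have eqb: "integral\<^sup>L M (\<lambda>\<omega>. Zb b \<omega> * (g n \<omega> \<bullet> b)) = integral\<^sup>L M (\<lambda>\<omega>. Zb b \<omega> * (grd n \<omega> \<bullet> b))"
    if b: "b \<in> Basis" for b
  proof -
    have "integral\<^sup>L M (\<lambda>\<omega>. Zb b \<omega> * (g n \<omega> \<bullet> b))
        = integral\<^sup>L M (\<lambda>\<omega>. Zb b \<omega> * real_cond_exp M (Fa n) (\<lambda>\<omega>. g n \<omega> \<bullet> b) \<omega>)"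
      by (rule F.real_cond_exp_intg(2)[symmetric, OF int2[OF b] Zbm]) measurable
    also have "\<dots> = integral\<^sup>L M (\<lambda>\<omega>. Zb b \<omega> * (grd n \<omega> \<bullet> b))"
    proof (rule integral_cong_AE)
      show "AE \<omega> in M. Zb b \<omega> * real_cond_exp M (Fa n) (\<lambda>\<omega>. g n \<omega> \<bullet> b) \<omega> = Zb b \<omega> * (grd n \<omega> \<bullet> b)"
        using unbiased[OF n b] by eventually_elim (simp add: Fa_def grd_def)
    qed auto
    finally show ?thesis .
  qed
  have pweq: "Z \<omega> * Mp n \<omega> = (\<Sum>b\<in>Basis. k * (Zb b \<omega> * (g n \<omega> \<bullet> b)) - k * (Zb b \<omega> * (grd n \<omega> \<bullet> b)))" for \<omega>
  proof -
    have "grd n \<omega> \<bullet> xi n \<omega> = (\<Sum>b\<in>Basis. (grd n \<omega> \<bullet> b) * ((g n \<omega> \<bullet> b) - (grd n \<omega> \<bullet> b)))"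
    proof -
      have "grd n \<omega> \<bullet> xi n \<omega> = (\<Sum>b\<in>Basis. (grd n \<omega> \<bullet> b) * (xi n \<omega> \<bullet> b))"
        by (rule euclidean_inner)
      also have "\<dots> = (\<Sum>b\<in>Basis. (grd n \<omega> \<bullet> b) * ((g n \<omega> \<bullet> b) - (grd n \<omega> \<bullet> b)))"
        by (simp add: xi_def inner_diff_left)
      finally show ?thesis .
    qed
    note ie = this
    have "Z \<omega> * Mp n \<omega> = Z \<omega> * II n \<omega> * k * (grd n \<omega> \<bullet> xi n \<omega>)"
      by (simp add: Mp_def Mt_def k_def mult.assoc)
    also have "\<dots> = Z \<omega> * II n \<omega> * k * (\<Sum>b\<in>Basis. (grd n \<omega> \<bullet> b) * ((g n \<omega> \<bullet> b) - (grd n \<omega> \<bullet> b)))"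
      by (simp only: ie)
    also have "\<dots> = (\<Sum>b\<in>Basis. Z \<omega> * II n \<omega> * k * ((grd n \<omega> \<bullet> b) * ((g n \<omega> \<bullet> b) - (grd n \<omega> \<bullet> b))))"
      by (rule sum_distrib_left)
    also have "\<dots> = (\<Sum>b\<in>Basis. k * (Zb b \<omega> * (g n \<omega> \<bullet> b)) - k * (Zb b \<omega> * (grd n \<omega> \<bullet> b)))"
      by (rule sum.cong) (simp_all add: Zb_def algebra_simps)
    finally show ?thesis .
  qed
  define h where "h b \<omega> = k * (Zb b \<omega> * (g n \<omega> \<bullet> b)) - k * (Zb b \<omega> * (grd n \<omega> \<bullet> b))" for b \<omega>
  have hi: "integrable M (h b)" if b: "b \<in> Basis" for b
    unfolding h_def using int1[OF b] int2[OF b] by simp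
  have h0: "integral\<^sup>L M (h b) = 0" if b: "b \<in> Basis" for b
  proof -
    have "integral\<^sup>L M (h b)
        = k * integral\<^sup>L M (\<lambda>\<omega>. Zb b \<omega> * (g n \<omega> \<bullet> b)) - k * integral\<^sup>L M (\<lambda>\<omega>. Zb b \<omega> * (grd n \<omega> \<bullet> b))"
      unfolding h_def using int1[OF b] int2[OF b] by simp
    also have "\<dots> = 0" using eqb[OF b] by simp
    finally show ?thesis .
  qed
  have "integral\<^sup>L M (\<lambda>\<omega>. Z \<omega> * Mp n \<omega>) = integral\<^sup>L M (\<lambda>\<omega>. \<Sum>b\<in>Basis. h b \<omega>)"
    by (simp add: pweq h_def)
  also have "\<dots> = (\<Sum>b\<in>Basis. integral\<^sup>L M (h b))"
    by (rule Bochner_Integration.integral_sum) (rule hi)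
  also have "\<dots> = 0" using h0 by simp
  finally show ?thesis by simp
qed

end



context sgd begin

lemma int_expS:
  assumes lam: "0 \<le> lam" and n: "n \<le> Suc T"
  shows "integrable M (\<lambda>\<omega>. exp (S lam n \<omega>))"
proof (rule integrable_const_bound[where B="exp (real n * (lam * CC))"])
  have [measurable]: "S lam n \<in> borel_measurable M" by (rule S_M)
  show "(\<lambda>\<omega>. exp (S lam n \<omega>)) \<in> borel_measurable M" by measurable
  show "AE \<omega> in M. norm (exp (S lam n \<omega>)) \<le> exp (real n * (lam * CC))"
    using AE_noiseok by eventually_elim (use S_le[OF lam _ n] in auto)
qed

lemma supermart:
  assumes lam: "0 \<le> lam"
  shows "1 \<le> n \<Longrightarrow> n \<le> Suc T \<Longrightarrow> integral\<^sup>L M (\<lambda>\<omega>. exp (S lam n \<omega>)) \<le> 1"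
proof (induction n)
  case 0 then show ?case by simp
next
  case (Suc n)
  show ?case
  proof (cases "n = 0")
    case True
    then show ?thesis by (simp add: S_def)
  next
    case False
    then have n: "1 \<le> n" "n \<le> T" using Suc by auto
    define Z where "Z \<omega> = exp (S lam n \<omega>) * phi lam n \<omega>" for \<omega>
    have [measurable]: "S lam n \<in> borel_measurable (Fa n)" by (rule S_F)
    have [measurable]: "phi lam n \<in> borel_measurable (Fa n)" by (rule phi_F[OF n(1)])
    have Zm: "Z \<in> borel_measurable (Fa n)" unfolding Z_def by measurable
    have [measurable]: "Z \<in> borel_measurable M" using measurable_from_subalg[OF subalg Zm] .
    have [measurable]: "Mp n \<in> borel_measurable M" using Mp_M[where n="Suc n" and t=n] n by simp
    define B where "B = exp (real n * (lam * CC)) * (lam * exp (lam * Cmax))"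
    have ZB: "AE \<omega> in M. \<bar>Z \<omega>\<bar> \<le> B"
      using AE_noiseok
    proof eventually_elim
      case (elim \<omega>)
      have "\<bar>Z \<omega>\<bar> = exp (S lam n \<omega>) * phi lam n \<omega>"
        using phi_bounds(1)[OF lam n(1)] by (simp add: Z_def)
      also have "\<dots> \<le> B" unfolding B_def
        using S_le[OF lam elim, of n] n phi_bounds[OF lam n(1), of \<omega>]
        by (intro mult_mono) auto
      finally show ?case .
    qed
    have CC0: "CC \<ge> 0" by (rule CC_nonneg)
    have intZM: "integrable M (\<lambda>\<omega>. Z \<omega> * Mp n \<omega>)"
    proof (rule integrable_const_bound[where B="\<bar>B\<bar> * CC"])
      show "AE \<omega> in M. norm (Z \<omega> * Mp n \<omega>) \<le> \<bar>B\<bar> * CC"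
        using AE_noiseok ZB
      proof eventually_elim
        case (elim \<omega>)
        have "\<bar>Mp n \<omega>\<bar> \<le> CC" using Mp_abs[OF elim(1)] n by auto
        then show ?case using elim(2) by (simp add: abs_mult) (intro mult_mono, auto)
      qed
    qed measurable
    have ineq: "AE \<omega> in M. exp (S lam (Suc n) \<omega>) \<le> exp (S lam n \<omega>) + Z \<omega> * Mp n \<omega>"
      using AE_noiseok
    proof eventually_elim
      case (elim \<omega>)
      have "exp (S lam (Suc n) \<omega>) = exp (S lam n \<omega>) * exp (Y lam n \<omega>)"
        by (simp add: S_Suc[OF n(1)] exp_add)
      also have "\<dots> \<le> exp (S lam n \<omega>) * (1 + Mp n \<omega> * phi lam n \<omega>)"
        using expY[OF lam elim] n by (intro mult_left_mono) auto
      also have "\<dots> = exp (S lam n \<omega>) + Z \<omega> * Mp n \<omega>" by (simp add: Z_def algebra_simps)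
      finally show ?case .
    qed
    have "integral\<^sup>L M (\<lambda>\<omega>. exp (S lam (Suc n) \<omega>)) \<le> integral\<^sup>L M (\<lambda>\<omega>. exp (S lam n \<omega>) + Z \<omega> * Mp n \<omega>)"
      by (rule integral_mono_AE[OF int_expS[OF lam Suc.prems(2)] _ ineq])
        (use int_expS[OF lam, of n] n intZM in auto)
    also have "\<dots> = integral\<^sup>L M (\<lambda>\<omega>. exp (S lam n \<omega>)) + integral\<^sup>L M (\<lambda>\<omega>. Z \<omega> * Mp n \<omega>)"
      by (rule Bochner_Integration.integral_add) (use int_expS[OF lam, of n] n intZM in auto)
    also have "integral\<^sup>L M (\<lambda>\<omega>. Z \<omega> * Mp n \<omega>) = 0" by (rule orth[OF n Zm ZB])
    also have "integral\<^sup>L M (\<lambda>\<omega>. exp (S lam n \<omega>)) \<le> 1" using Suc.IH n by auto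
    finally show ?thesis by simp
  qed
qed

end



context sgd begin

lemma tail:
  assumes lam: "0 \<le> lam" and n: "1 \<le> n" "n \<le> Suc T"
  shows "measure M {\<omega> \<in> space M. x \<le> S lam n \<omega>} \<le> exp (-x)"
proof -
  have "{\<omega> \<in> space M. x \<le> S lam n \<omega>} = {\<omega> \<in> space M. exp x \<le> exp (S lam n \<omega>)}" by auto
  also have "measure M \<dots> \<le> integral\<^sup>L M (\<lambda>\<omega>. exp (S lam n \<omega>)) / exp x"
    by (rule integral_Markov_inequality_measure[OF int_expS[OF lam n(2)] sets.top]) auto
  also have "\<dots> \<le> 1 / exp x" using supermart[OF lam n] by (intro divide_right_mono) auto
  also have "\<dots> = exp (-x)" by (simp add: exp_minus field_simps)
  finally show ?thesis .
qed

lemma nn_sets: "{\<omega> \<in> space M. \<not> noiseok \<omega>} \<in> sets M"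
proof -
  have "{\<omega> \<in> space M. \<not> noiseok \<omega>} = space M - {\<omega> \<in> space M. noiseok \<omega>}" by auto
  then show ?thesis using sets.Diff[OF sets.top noiseok_sets] by simp
qed

lemma noiseok_null: "measure M {\<omega> \<in> space M. \<not> noiseok \<omega>} = 0"
proof -
  have s: "{\<omega> \<in> space M. \<not> noiseok \<omega>} \<in> sets M" by (rule nn_sets)
  have "emeasure M {\<omega> \<in> space M. \<not> noiseok \<omega>} = 0"
    using AE_iff_measurable[OF s refl] AE_noiseok by simp
  then show ?thesis by (simp add: measure_def)
qed

lemma bad:
  assumes c: "0 < c" and n: "1 \<le> n" "n \<le> Suc T"
  shows "measure M {\<omega> \<in> space M. c * (\<Sum>t\<in>{1..<n}. II t \<omega> * GG t \<omega>) + eta\<^sup>2 * KK / (2 * c) * x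
            < (\<Sum>t\<in>{1..<n}. Mp t \<omega>)} \<le> exp (-x)"
proof (cases "KK = 0")
  case False
  then have K: "KK > 0" using KK_nonneg by simp
  define lam where "lam = 2 * c / (eta\<^sup>2 * KK)"
  have lam0: "lam > 0" using c K eta_pos by (simp add: lam_def)
  have lc: "lam\<^sup>2 / 2 * eta\<^sup>2 * KK = lam * c" "eta\<^sup>2 * KK / (2 * c) = 1 / lam"
    using c K eta_pos by (simp_all add: lam_def power2_eq_square field_simps)
  have Seq: "S lam n \<omega> = lam * ((\<Sum>t\<in>{1..<n}. Mp t \<omega>) - c * (\<Sum>t\<in>{1..<n}. II t \<omega> * GG t \<omega>))" for \<omega>
  proof -
    have "S lam n \<omega> = lam * (\<Sum>t\<in>{1..<n}. Mp t \<omega>) - (lam\<^sup>2 / 2 * eta\<^sup>2 * KK) * (\<Sum>t\<in>{1..<n}. II t \<omega> * GG t \<omega>)"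
      unfolding S_def Y_def by (simp add: sum_subtractf sum_distrib_left)
    then show ?thesis unfolding lc by (simp add: algebra_simps)
  qed
  have "{\<omega> \<in> space M. c * (\<Sum>t\<in>{1..<n}. II t \<omega> * GG t \<omega>) + eta\<^sup>2 * KK / (2 * c) * x
            < (\<Sum>t\<in>{1..<n}. Mp t \<omega>)} \<subseteq> {\<omega> \<in> space M. x \<le> S lam n \<omega>}"
  proof safe
    fix \<omega> assume "\<omega> \<in> space M" and
      h: "c * (\<Sum>t\<in>{1..<n}. II t \<omega> * GG t \<omega>) + eta\<^sup>2 * KK / (2 * c) * x < (\<Sum>t\<in>{1..<n}. Mp t \<omega>)"
    then have "x / lam < (\<Sum>t\<in>{1..<n}. Mp t \<omega>) - c * (\<Sum>t\<in>{1..<n}. II t \<omega> * GG t \<omega>)"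
      using lc(2) by simp
    then have "x < lam * ((\<Sum>t\<in>{1..<n}. Mp t \<omega>) - c * (\<Sum>t\<in>{1..<n}. II t \<omega> * GG t \<omega>))"
      using lam0 by (simp add: field_simps)
    then show "x \<le> S lam n \<omega>" by (simp add: Seq)
  qed
  then have "measure M {\<omega> \<in> space M. c * (\<Sum>t\<in>{1..<n}. II t \<omega> * GG t \<omega>) + eta\<^sup>2 * KK / (2 * c) * x
            < (\<Sum>t\<in>{1..<n}. Mp t \<omega>)} \<le> measure M {\<omega> \<in> space M. x \<le> S lam n \<omega>}"
  proof (rule finite_measure_mono)
    have [measurable]: "S lam n \<in> borel_measurable M" by (rule S_M)
    show "{\<omega> \<in> space M. x \<le> S lam n \<omega>} \<in> sets M" by measurable
  qed
  also have "\<dots> \<le> exp (-x)" by (rule tail[OF less_imp_le[OF lam0] n])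
  finally show ?thesis .
next
  case True
  have "{\<omega> \<in> space M. c * (\<Sum>t\<in>{1..<n}. II t \<omega> * GG t \<omega>) + eta\<^sup>2 * KK / (2 * c) * x
            < (\<Sum>t\<in>{1..<n}. Mp t \<omega>)} \<subseteq> {\<omega> \<in> space M. \<not> noiseok \<omega>}"
  proof safe
    fix \<omega> assume "\<omega> \<in> space M" and
      h: "c * (\<Sum>t\<in>{1..<n}. II t \<omega> * GG t \<omega>) + eta\<^sup>2 * KK / (2 * c) * x < (\<Sum>t\<in>{1..<n}. Mp t \<omega>)"
      and nk: "noiseok \<omega>"
    have "Mp t \<omega> = 0" if "t \<in> {1..<n}" for t
    proof -
      have "\<bar>Mp t \<omega>\<bar> \<le> cc t \<omega>" using Mp_le_cc[OF nk] that n by auto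
      then show ?thesis by (simp add: cc_def True)
    qed
    then have "(\<Sum>t\<in>{1..<n}. Mp t \<omega>) = 0" by simp
    moreover have "c * (\<Sum>t\<in>{1..<n}. II t \<omega> * GG t \<omega>) \<ge> 0"
      using c IG_nonneg by (simp add: sum_nonneg)
    ultimately show False using h True by simp
  qed
  then have "measure M {\<omega> \<in> space M. c * (\<Sum>t\<in>{1..<n}. II t \<omega> * GG t \<omega>) + eta\<^sup>2 * KK / (2 * c) * x
            < (\<Sum>t\<in>{1..<n}. Mp t \<omega>)} \<le> measure M {\<omega> \<in> space M. \<not> noiseok \<omega>}"
  proof (rule finite_measure_mono)
    show "{\<omega> \<in> space M. \<not> noiseok \<omega>} \<in> sets M" by (rule nn_sets)
  qed
  also have "\<dots> = 0" by (rule noiseok_null)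
  also have "(0::real) \<le> exp (-x)" by simp
  finally show ?thesis .
qed

end



lemma lin_aux0: "(d::real) \<le> D - a + s + R \<Longrightarrow> s \<le> a + X \<Longrightarrow> d \<le> D + X + R"
  by linarith

lemma lin_aux1: "(d::real) \<le> D + X + R \<Longrightarrow> X \<le> 4 / 7 * Y \<Longrightarrow> Y \<le> m + (2 * D + 2 * b + 3 * m) / 2
  \<Longrightarrow> R \<le> b / 2 \<Longrightarrow> 0 \<le> D \<Longrightarrow> 0 \<le> m \<Longrightarrow> 0 \<le> b \<Longrightarrow> d \<le> 2 * D + 2 * b + 3 * m"
  by argo

context sgd begin

lemma Dl_step:
  assumes t: "1 \<le> t" "t \<le> T" and nk: "noiseok \<omega>"
  shows "Dl (Suc t) \<omega> \<le> Dl t \<omega> - 7 * eta / 8 * GG t \<omega> + Mt t \<omega> + \<beta> * eta\<^sup>2 * \<sigma>0\<^sup>2 / 2"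
proof -
  define a where "a = grd t \<omega>"
  define e where "e = xi t \<omega>"
  have wS: "w (Suc t) \<omega> - w t \<omega> = -(eta *\<^sub>R (a + e))"
    using w_Suc[OF t(1)] by (simp add: a_def e_def xi_def)
  have G: "GG t \<omega> = a \<bullet> a" by (simp add: GG_def a_def power2_norm_eq_inner)
  have ee: "e \<bullet> e \<le> \<sigma>0\<^sup>2 + \<sigma>1\<^sup>2 * GG t \<omega>"
    using nk t by (auto simp: noiseok_def e_def power2_norm_eq_inner)
  have Mt: "Mt t \<omega> = -(eta * (1 - \<beta> * eta)) * (a \<bullet> e)" by (simp add: Mt_def a_def e_def)
  have "f (w (Suc t) \<omega>) \<le> f (w t \<omega>) + f' (w t \<omega>) \<bullet> (w (Suc t) \<omega> - w t \<omega>)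
      + \<beta> / 2 * (norm (w (Suc t) \<omega> - w t \<omega>))\<^sup>2"
    by (rule descent[OF grad smooth]) (use bpos in auto)
  also have "f' (w t \<omega>) \<bullet> (w (Suc t) \<omega> - w t \<omega>) = - eta * (a \<bullet> a) - eta * (a \<bullet> e)"
    unfolding wS by (simp add: a_def[symmetric] grd_def[symmetric] inner_add_right algebra_simps)
  also have "(norm (w (Suc t) \<omega> - w t \<omega>))\<^sup>2 = eta\<^sup>2 * ((a \<bullet> a) + 2 * (a \<bullet> e) + (e \<bullet> e))"
    unfolding wS power2_norm_eq_inner
    by (simp add: inner_add_left inner_add_right inner_commute[of e a] power2_eq_square algebra_simps)
  finally have d1: "Dl (Suc t) \<omega> \<le> Dl t \<omega> - eta * (a \<bullet> a) - eta * (a \<bullet> e)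
      + \<beta> / 2 * (eta\<^sup>2 * ((a \<bullet> a) + 2 * (a \<bullet> e) + (e \<bullet> e)))"
    by (simp add: Dl_def)
  have d2: "Dl t \<omega> - eta * (a \<bullet> a) - eta * (a \<bullet> e) + \<beta> / 2 * (eta\<^sup>2 * ((a \<bullet> a) + 2 * (a \<bullet> e) + (e \<bullet> e)))
      = Dl t \<omega> - eta * GG t \<omega> + \<beta> * eta\<^sup>2 / 2 * GG t \<omega> + Mt t \<omega> + \<beta> * eta\<^sup>2 / 2 * (e \<bullet> e)"
    unfolding Mt G by (simp add: algebra_simps power2_eq_square)
  have d3: "\<beta> * eta\<^sup>2 / 2 * (e \<bullet> e) \<le> \<beta> * eta\<^sup>2 / 2 * (\<sigma>0\<^sup>2 + \<sigma>1\<^sup>2 * GG t \<omega>)"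
    using ee bpos by (intro mult_left_mono) auto
  have d4: "\<beta> * eta\<^sup>2 / 2 * (\<sigma>0\<^sup>2 + \<sigma>1\<^sup>2 * GG t \<omega>) + \<beta> * eta\<^sup>2 / 2 * GG t \<omega>
      = \<beta> * eta\<^sup>2 * \<sigma>0\<^sup>2 / 2 + (eta * GG t \<omega> / 2) * (\<beta> * eta * (1 + \<sigma>1\<^sup>2))"
    by (simp add: algebra_simps power2_eq_square)
  have d5: "(eta * GG t \<omega> / 2) * (\<beta> * eta * (1 + \<sigma>1\<^sup>2)) \<le> (eta * GG t \<omega> / 2) * (1/4)"
    using beta_eta1 eta_pos GG_nonneg[of t \<omega>] by (intro mult_left_mono) auto
  show ?thesis using d1 d2 d3 d4 d5 by linarith
qed

lemma telesc:
  assumes nk: "noiseok \<omega>"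
  shows "1 \<le> k \<Longrightarrow> k \<le> Suc T \<Longrightarrow> Dl k \<omega> \<le> Dl 1 \<omega> - 7 * eta / 8 * (\<Sum>t\<in>{1..<k}. GG t \<omega>)
     + (\<Sum>t\<in>{1..<k}. Mt t \<omega>) + real (k - 1) * (\<beta> * eta\<^sup>2 * \<sigma>0\<^sup>2 / 2)"
proof (induction k)
  case 0 then show ?case by simp
next
  case (Suc k)
  show ?case
  proof (cases "k = 0")
    case True then show ?thesis by simp
  next
    case False
    then have k: "1 \<le> k" "k \<le> T" using Suc by auto
    have IH: "Dl k \<omega> \<le> Dl 1 \<omega> - 7 * eta / 8 * (\<Sum>t\<in>{1..<k}. GG t \<omega>)
     + (\<Sum>t\<in>{1..<k}. Mt t \<omega>) + real (k - 1) * (\<beta> * eta\<^sup>2 * \<sigma>0\<^sup>2 / 2)"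
      using Suc.IH k by auto
    have st: "Dl (Suc k) \<omega> \<le> Dl k \<omega> - 7 * eta / 8 * GG k \<omega> + Mt k \<omega> + \<beta> * eta\<^sup>2 * \<sigma>0\<^sup>2 / 2"
      by (rule Dl_step[OF k nk])
    have ins: "{1..<Suc k} = insert k {1..<k}" using k by auto
    have s1: "(\<Sum>t\<in>{1..<Suc k}. GG t \<omega>) = GG k \<omega> + (\<Sum>t\<in>{1..<k}. GG t \<omega>)" unfolding ins by simp
    have s2: "(\<Sum>t\<in>{1..<Suc k}. Mt t \<omega>) = Mt k \<omega> + (\<Sum>t\<in>{1..<k}. Mt t \<omega>)" unfolding ins by simp
    have r: "real (Suc k - 1) * (\<beta> * eta\<^sup>2 * \<sigma>0\<^sup>2 / 2) = real (k - 1) * (\<beta> * eta\<^sup>2 * \<sigma>0\<^sup>2 / 2) + \<beta> * eta\<^sup>2 * \<sigma>0\<^sup>2 / 2"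
    proof -
      have "real (Suc k - 1) = real (k - 1) + 1" using k by auto
      then show ?thesis by (simp only: distrib_right mult_1)
    qed
    show ?thesis unfolding s1 s2 r using IH st by (simp only: distrib_left; linarith)
  qed
qed

lemma Dl1: "Dl 1 \<omega> = D1" unfolding Dl_def D1_def init by (rule refl)

lemma sum_II_one:
  assumes "\<And>t. t \<in> {1..<k} \<Longrightarrow> II t \<omega> = 1"
  shows "(\<Sum>t\<in>{1..<k}. Mp t \<omega>) = (\<Sum>t\<in>{1..<k}. Mt t \<omega>)"
    "(\<Sum>t\<in>{1..<k}. II t \<omega> * GG t \<omega>) = (\<Sum>t\<in>{1..<k}. GG t \<omega>)"
  using assms by (auto simp: Mp_def intro!: sum.cong)

lemma bounded:
  assumes nk: "noiseok \<omega>"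
    and E1: "\<forall>k\<in>{2..Suc T}. (\<Sum>t\<in>{1..<k}. Mp t \<omega>) \<le> 7 * eta / 8 * (\<Sum>t\<in>{1..<k}. II t \<omega> * GG t \<omega>)
               + eta\<^sup>2 * KK / (2 * (7 * eta / 8)) * ln (real T / \<delta>)"
  shows "k \<in> {1..Suc T} \<Longrightarrow> Dl k \<omega> \<le> FF"
proof (induction k rule: less_induct)
  case (less k)
  have mmLL: "mm * LL \<ge> 0" using mm_nonneg LL_ge1 by simp
  have ba: "\<beta> * \<alpha>\<^sup>2 \<ge> 0" using bpos by simp
  show ?case
  proof (cases "k = 1")
    case True
    then show ?thesis using Dl1 D1_nonneg mmLL ba unfolding FF_def by simp
  next
    case False
    then have k: "2 \<le> k" "k \<le> Suc T" using less.prems by auto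
    have IIk: "II t \<omega> = 1" if "t \<in> {1..<k}" for t
      by (rule II_one) (use that less.IH k in auto)
    have E: "(\<Sum>t\<in>{1..<k}. Mt t \<omega>) \<le> 7 * eta / 8 * (\<Sum>t\<in>{1..<k}. GG t \<omega>)
               + eta\<^sup>2 * KK / (2 * (7 * eta / 8)) * ln (real T / \<delta>)"
    proof -
      have kk: "k \<in> {2..Suc T}" using k by simp
      have s1: "(\<Sum>t\<in>{1..<k}. Mp t \<omega>) = (\<Sum>t\<in>{1..<k}. Mt t \<omega>)"
        and s2: "(\<Sum>t\<in>{1..<k}. II t \<omega> * GG t \<omega>) = (\<Sum>t\<in>{1..<k}. GG t \<omega>)"
        using sum_II_one[of k \<omega>, OF IIk] by auto
      show ?thesis using bspec[OF E1 kk] unfolding s1 s2 .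
    qed
    have tel: "Dl k \<omega> \<le> D1 - 7 * eta / 8 * (\<Sum>t\<in>{1..<k}. GG t \<omega>)
     + (\<Sum>t\<in>{1..<k}. Mt t \<omega>) + real (k - 1) * (\<beta> * eta\<^sup>2 * \<sigma>0\<^sup>2 / 2)"
      using telesc[OF nk, of k] k Dl1 by auto
    have f1: "eta\<^sup>2 * KK / (2 * (7 * eta / 8)) * ln (real T / \<delta>) \<le> 4 / 7 * (eta * KK * LL)"
    proof -
      have eq: "eta\<^sup>2 * KK / (2 * (7 * eta / 8)) = 4 / 7 * (eta * KK)"
        using eta_pos by (simp add: power2_eq_square field_simps)
      have "eta\<^sup>2 * KK / (2 * (7 * eta / 8)) * ln (real T / \<delta>) = 4 / 7 * (eta * KK) * ln (real T / \<delta>)"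
        unfolding eq by (rule refl)
      also have "\<dots> \<le> 4 / 7 * (eta * KK) * LL"
        using ln_le_LL eta_pos KK_nonneg by (intro mult_left_mono) auto
      also have "\<dots> = 4 / 7 * (eta * KK * LL)" by simp
      finally show ?thesis .
    qed
    have f2: "eta * KK * LL \<le> mm * LL + FF / 2"
    proof -
      have "eta * KK * LL = (eta * \<sigma>0\<^sup>2) * LL + 2 * FF * (\<beta> * eta * \<sigma>1\<^sup>2 * LL)"
        by (simp add: KK_def algebra_simps)
      moreover have "(eta * \<sigma>0\<^sup>2) * LL \<le> mm * LL"
        using eta_s0_le_mm LL_ge1 by (intro mult_right_mono) auto
      moreover have "2 * FF * (\<beta> * eta * \<sigma>1\<^sup>2 * LL) \<le> 2 * FF * (1/4)"
        using beta_eta2 FF_pos by (intro mult_left_mono) auto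
      ultimately show ?thesis by simp
    qed
    have f3: "real (k - 1) * (\<beta> * eta\<^sup>2 * \<sigma>0\<^sup>2 / 2) \<le> \<beta> * \<alpha>\<^sup>2 / 2"
    proof -
      have "real (k - 1) * (\<beta> * eta\<^sup>2 * \<sigma>0\<^sup>2 / 2) \<le> real T * (\<beta> * eta\<^sup>2 * \<sigma>0\<^sup>2 / 2)"
        using k bpos by (intro mult_right_mono) auto
      also have "\<dots> = \<beta> / 2 * (eta\<^sup>2 * \<sigma>0\<^sup>2 * real T)" by (simp add: algebra_simps)
      also have "\<dots> \<le> \<beta> / 2 * \<alpha>\<^sup>2" using eta_sq_T bpos by (intro mult_left_mono) auto
      finally show ?thesis by simp
    qed
    have e1: "3 * mm * LL = 3 * (mm * LL)" "2 * \<beta> * \<alpha>\<^sup>2 = 2 * (\<beta> * \<alpha>\<^sup>2)" by simp_all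
    have f2': "eta * KK * LL \<le> mm * LL + (2 * D1 + 2 * (\<beta> * \<alpha>\<^sup>2) + 3 * (mm * LL)) / 2"
      using f2 unfolding FF_def e1 .
    show ?thesis unfolding FF_def e1
      by (rule lin_aux1[OF lin_aux0[OF tel E] f1 f2' f3 D1_nonneg mmLL ba])
  qed
qed

lemma part_i:
  assumes nk: "noiseok \<omega>"
    and B: "\<forall>k\<in>{1..Suc T}. Dl k \<omega> \<le> FF"
    and E2: "(\<Sum>t\<in>{1..<Suc T}. Mp t \<omega>) \<le> 3 * eta / 8 * (\<Sum>t\<in>{1..<Suc T}. II t \<omega> * GG t \<omega>)
               + eta\<^sup>2 * KK / (2 * (3 * eta / 8)) * ln (1 / \<delta>)"
  shows "(1 / real T) * (\<Sum>t=1..T. (norm (f' (w t \<omega>)))\<^sup>2)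
             \<le> (\<beta> * \<alpha> + D1 / \<alpha>) * (2 * \<sigma>0 / sqrt (real T))
               + (8 * \<beta> * D1 * (1 + 4 * \<sigma>1\<^sup>2) * LL
                  + 24 * \<sigma>1\<^sup>2 * \<beta>\<^sup>2 * \<alpha>\<^sup>2 * ll
                  + 15 * \<sigma>0\<^sup>2 * ll) * (1 / real T)"
proof -
  define SG where "SG = (\<Sum>t\<in>{1..<Suc T}. GG t \<omega>)"
  define s where "s = sqrt (real T)"
  have s0': "s > 0" using T1 by (simp add: s_def)
  have ss: "s * s = real T" by (simp add: s_def)
  have Tpos: "real T > 0" using T1 by simp
  have SGeq: "(\<Sum>t=1..T. (norm (f' (w t \<omega>)))\<^sup>2) = SG"
    unfolding SG_def GG_def grd_def using atLeastLessThanSuc_atLeastAtMost by simp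
  have IIk: "II t \<omega> = 1" if "t \<in> {1..<Suc T}" for t
    by (rule II_one) (use that B in auto)
  have E: "(\<Sum>t\<in>{1..<Suc T}. Mt t \<omega>) \<le> 3 * eta / 8 * SG + 4 / 3 * eta * (KK * ll)"
  proof -
    have eq1: "eta\<^sup>2 * KK / (2 * (3 * eta / 8)) = 4 / 3 * eta * KK"
      using eta_pos by (simp add: power2_eq_square field_simps)
    have "4 / 3 * eta * KK * ln (1 / \<delta>) \<le> 4 / 3 * eta * KK * ll"
      using ln_le_ll eta_pos KK_nonneg by (intro mult_left_mono) auto
    then have k1: "eta\<^sup>2 * KK / (2 * (3 * eta / 8)) * ln (1 / \<delta>) \<le> 4 / 3 * eta * (KK * ll)"
      unfolding eq1 by (simp only: mult.assoc)
    have s1: "(\<Sum>t\<in>{1..<Suc T}. Mp t \<omega>) = (\<Sum>t\<in>{1..<Suc T}. Mt t \<omega>)"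
      and s2: "(\<Sum>t\<in>{1..<Suc T}. II t \<omega> * GG t \<omega>) = (\<Sum>t\<in>{1..<Suc T}. GG t \<omega>)"
      using sum_II_one[of "Suc T" \<omega>, OF IIk] by auto
    show ?thesis using E2 k1 unfolding s1 s2 SG_def[symmetric] by linarith
  qed
  have tel: "Dl (Suc T) \<omega> \<le> D1 - 7 * eta / 8 * SG + (\<Sum>t\<in>{1..<Suc T}. Mt t \<omega>) + real T * (\<beta> * eta\<^sup>2 * \<sigma>0\<^sup>2 / 2)"
    using telesc[OF nk, of "Suc T"] Dl1 T1 unfolding SG_def by auto
  have D0: "Dl (Suc T) \<omega> \<ge> 0" using min_le by (simp add: Dl_def)
  have lin: "eta / 2 * SG \<le> D1 + 4 / 3 * eta * (KK * ll) + real T * (\<beta> * eta\<^sup>2 * \<sigma>0\<^sup>2 / 2)"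
    using tel E D0 by linarith
  have P1: "SG \<le> 2 * (D1 / eta) + 8 / 3 * (KK * ll) + real T * \<beta> * eta * \<sigma>0\<^sup>2"
  proof -
    have "eta / 2 * SG * (2 / eta) \<le> (D1 + 4 / 3 * eta * (KK * ll) + real T * (\<beta> * eta\<^sup>2 * \<sigma>0\<^sup>2 / 2)) * (2 / eta)"
      using lin eta_pos by (intro mult_right_mono) auto
    then show ?thesis using eta_pos by (simp add: field_simps power2_eq_square)
  qed
  have P2: "2 * (D1 / eta) \<le> 8 * (\<beta> * D1) + 8 * (\<beta> * D1 * \<sigma>1\<^sup>2 * LL) + 2 * (D1 * \<sigma>0 * s / \<alpha>)"
  proof -
    have "2 * (D1 / eta) = 2 * D1 * (1 / eta)" by simp
    also have "\<dots> \<le> 2 * D1 * (AA + \<sigma>0 * s / \<alpha>)"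
      using inv_eta D1_nonneg unfolding s_def by (intro mult_left_mono) auto
    also have "\<dots> = 8 * (\<beta> * D1) + 8 * (\<beta> * D1 * \<sigma>1\<^sup>2 * LL) + 2 * (D1 * \<sigma>0 * s / \<alpha>)"
      unfolding AA_def by (simp add: algebra_simps)
    finally show ?thesis .
  qed
  have P3: "real T * \<beta> * eta * \<sigma>0\<^sup>2 \<le> \<beta> * \<alpha> * \<sigma>0 * s"
  proof (cases "\<sigma>0 = 0")
    case True then show ?thesis by simp
  next
    case False
    then have sp: "\<sigma>0 > 0" using s0 by auto
    have "real T * \<beta> * eta * \<sigma>0\<^sup>2 \<le> real T * \<beta> * (\<alpha> / (\<sigma>0 * s)) * \<sigma>0\<^sup>2"
      using eta_le_B[OF sp] bpos Tpos unfolding s_def[symmetric]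
      by (intro mult_right_mono mult_left_mono) auto
    also have "\<dots> = \<beta> * \<alpha> * \<sigma>0 * s" using sp s0' ss[symmetric]
      by (simp add: field_simps power2_eq_square)
    finally show ?thesis .
  qed
  have P4: "KK * ll = \<sigma>0\<^sup>2 * ll + 4 * (\<beta> * D1 * \<sigma>1\<^sup>2 * ll) + 4 * (\<sigma>1\<^sup>2 * \<beta>\<^sup>2 * \<alpha>\<^sup>2 * ll)
      + 6 * (\<beta> * \<sigma>1\<^sup>2 * mm * LL * ll)"
    unfolding KK_def FF_def by (simp add: algebra_simps power2_eq_square)
  have P5: "\<beta> * \<sigma>1\<^sup>2 * mm * LL * ll \<le> \<sigma>0\<^sup>2 * ll / 4"
  proof -
    have m: "mm \<le> \<sigma>0\<^sup>2 / AA" unfolding mm_def AA_def by simp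
    have a: "mm * AA \<le> \<sigma>0\<^sup>2" using m AA_pos by (simp add: pos_le_divide_eq)
    have "4 * \<beta> * \<sigma>1\<^sup>2 * LL \<le> AA" unfolding AA_def using bpos by (simp add: algebra_simps)
    then have b: "mm * (4 * \<beta> * \<sigma>1\<^sup>2 * LL) \<le> mm * AA" using mm_nonneg by (rule mult_left_mono)
    have c: "\<beta> * \<sigma>1\<^sup>2 * mm * LL = mm * (4 * \<beta> * \<sigma>1\<^sup>2 * LL) / 4" by (simp add: algebra_simps)
    have "\<beta> * \<sigma>1\<^sup>2 * mm * LL \<le> \<sigma>0\<^sup>2 / 4" unfolding c using a b by linarith
    then show ?thesis using ll_nonneg by (metis mult_right_mono times_divide_eq_left)
  qed
  have P6: "\<beta> * D1 * \<sigma>1\<^sup>2 * ll \<le> \<beta> * D1 * \<sigma>1\<^sup>2 * LL"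
    using ll_le_LL bpos D1_nonneg by (intro mult_left_mono) auto
  have P7: "\<beta> * D1 \<le> \<beta> * D1 * LL"
    using LL_ge1 bpos D1_nonneg by (metis mult_left_mono mult.right_neutral mult_nonneg_nonneg less_imp_le)
  have nn: "\<beta> * \<alpha> * \<sigma>0 * s \<ge> 0" "\<sigma>0\<^sup>2 * ll \<ge> 0" "\<sigma>1\<^sup>2 * \<beta>\<^sup>2 * \<alpha>\<^sup>2 * ll \<ge> 0"
    using bpos apos s0 s0' ll_nonneg by auto
  have nn2: "\<beta> * D1 * \<sigma>1\<^sup>2 * LL \<ge> 0" using bpos D1_nonneg LL_ge1 by simp
  have RHS: "real T * ((\<beta> * \<alpha> + D1 / \<alpha>) * (2 * \<sigma>0 / s)
               + (8 * \<beta> * D1 * (1 + 4 * \<sigma>1\<^sup>2) * LL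
                  + 24 * \<sigma>1\<^sup>2 * \<beta>\<^sup>2 * \<alpha>\<^sup>2 * ll
                  + 15 * \<sigma>0\<^sup>2 * ll) * (1 / real T))
     = 2 * (\<beta> * \<alpha> * \<sigma>0 * s) + 2 * (D1 * \<sigma>0 * s / \<alpha>) + 8 * (\<beta> * D1 * LL)
       + 32 * (\<beta> * D1 * \<sigma>1\<^sup>2 * LL) + 24 * (\<sigma>1\<^sup>2 * \<beta>\<^sup>2 * \<alpha>\<^sup>2 * ll) + 15 * (\<sigma>0\<^sup>2 * ll)"
  proof -
    have Ts: "real T / s = s" using ss s0' by (simp add: field_simps)
    have "real T * ((\<beta> * \<alpha> + D1 / \<alpha>) * (2 * \<sigma>0 / s)) = 2 * (\<beta> * \<alpha> * \<sigma>0 * s) + 2 * (D1 * \<sigma>0 * s / \<alpha>)"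
    proof -
      have "real T * ((\<beta> * \<alpha> + D1 / \<alpha>) * (2 * \<sigma>0 / s)) = (real T / s) * ((\<beta> * \<alpha> + D1 / \<alpha>) * (2 * \<sigma>0))"
        by (simp add: field_simps)
      also have "\<dots> = s * ((\<beta> * \<alpha> + D1 / \<alpha>) * (2 * \<sigma>0))" by (simp add: Ts)
      also have "\<dots> = 2 * (\<beta> * \<alpha> * \<sigma>0 * s) + 2 * (D1 * \<sigma>0 * s / \<alpha>)"
        by (simp add: algebra_simps)
      finally show ?thesis .
    qed
    moreover have "real T * ((8 * \<beta> * D1 * (1 + 4 * \<sigma>1\<^sup>2) * LL
                  + 24 * \<sigma>1\<^sup>2 * \<beta>\<^sup>2 * \<alpha>\<^sup>2 * ll + 15 * \<sigma>0\<^sup>2 * ll) * (1 / real T))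
       = 8 * (\<beta> * D1 * LL) + 32 * (\<beta> * D1 * \<sigma>1\<^sup>2 * LL) + 24 * (\<sigma>1\<^sup>2 * \<beta>\<^sup>2 * \<alpha>\<^sup>2 * ll) + 15 * (\<sigma>0\<^sup>2 * ll)"
      using Tpos by (simp add: algebra_simps)
    ultimately show ?thesis by (simp add: distrib_left)
  qed
  have main: "SG \<le> real T * ((\<beta> * \<alpha> + D1 / \<alpha>) * (2 * \<sigma>0 / s)
               + (8 * \<beta> * D1 * (1 + 4 * \<sigma>1\<^sup>2) * LL
                  + 24 * \<sigma>1\<^sup>2 * \<beta>\<^sup>2 * \<alpha>\<^sup>2 * ll
                  + 15 * \<sigma>0\<^sup>2 * ll) * (1 / real T))"
    unfolding RHS using P1 P2 P3 P4 P5 P6 P7 nn nn2 by linarith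
  have "(1 / real T) * SG \<le> (1 / real T) * (real T * ((\<beta> * \<alpha> + D1 / \<alpha>) * (2 * \<sigma>0 / s)
               + (8 * \<beta> * D1 * (1 + 4 * \<sigma>1\<^sup>2) * LL
                  + 24 * \<sigma>1\<^sup>2 * \<beta>\<^sup>2 * \<alpha>\<^sup>2 * ll
                  + 15 * \<sigma>0\<^sup>2 * ll) * (1 / real T)))"
    using main Tpos by (intro mult_left_mono) auto
  then show ?thesis unfolding SGeq s_def using Tpos by simp
qed

end



context sgd begin

lemma sums_M:
  "(\<lambda>\<omega>. \<Sum>t\<in>{1..<k}. Mp t \<omega>) \<in> borel_measurable M"
  "(\<lambda>\<omega>. \<Sum>t\<in>{1..<k}. II t \<omega> * GG t \<omega>) \<in> borel_measurable M"
proof -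
  show "(\<lambda>\<omega>. \<Sum>t\<in>{1..<k}. Mp t \<omega>) \<in> borel_measurable M"
    by (rule borel_measurable_sum) (use Mp_M[where n=k] in auto)
  have "(\<lambda>\<omega>. II t \<omega> * GG t \<omega>) \<in> borel_measurable M" if "t \<in> {1..<k}" for t
  proof -
    have [measurable]: "II t \<in> borel_measurable M" "GG t \<in> borel_measurable M"
      using that II_M[where n=k and t=t] GG_M[where n=k and t=t] by auto
    show ?thesis by measurable
  qed
  then show "(\<lambda>\<omega>. \<Sum>t\<in>{1..<k}. II t \<omega> * GG t \<omega>) \<in> borel_measurable M"
    by (rule borel_measurable_sum)
qed

lemma main:
  "measure M {\<omega> \<in> space M.
           (1 / real T) * (\<Sum>t=1..T. (norm (f' (w t \<omega>)))\<^sup>2)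
             \<le> (\<beta> * \<alpha> + (f w1 - fstar) / \<alpha>) * (2 * \<sigma>0 / sqrt (real T))
               + (8 * \<beta> * (f w1 - fstar) * (1 + 4 * \<sigma>1\<^sup>2) * log 2 (real T / \<delta>)
                  + 24 * \<sigma>1\<^sup>2 * \<beta>\<^sup>2 * \<alpha>\<^sup>2 * log 2 (1 / \<delta>)
                  + 15 * \<sigma>0\<^sup>2 * log 2 (1 / \<delta>)) * (1 / real T)
           \<and> (\<forall>t\<in>{1..T+1}. f (w t \<omega>) - fstar
                \<le> 2 * (f w1 - fstar) + 2 * \<beta> * \<alpha>\<^sup>2
                  + 3 * min (\<sigma>0\<^sup>2 / (4 * \<beta> * (1 + \<sigma>1\<^sup>2 * log 2 (real T / \<delta>))))
                            (\<sigma>0 * \<alpha> / sqrt (real T)) * log 2 (real T / \<delta>))}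
         \<ge> 1 - 2 * \<delta>"
  (is "measure M ?Tg \<ge> _")
proof -
  have Tg_alt: "?Tg = {\<omega> \<in> space M.
           (1 / real T) * (\<Sum>t=1..T. (norm (f' (w t \<omega>)))\<^sup>2)
             \<le> (\<beta> * \<alpha> + D1 / \<alpha>) * (2 * \<sigma>0 / sqrt (real T))
               + (8 * \<beta> * D1 * (1 + 4 * \<sigma>1\<^sup>2) * LL
                  + 24 * \<sigma>1\<^sup>2 * \<beta>\<^sup>2 * \<alpha>\<^sup>2 * ll
                  + 15 * \<sigma>0\<^sup>2 * ll) * (1 / real T)
           \<and> (\<forall>t\<in>{1..T+1}. Dl t \<omega> \<le> FF)}"
    unfolding D1_def LL_def ll_def FF_def mm_def Dl_def by simp
  have m1: "(\<lambda>\<omega>. (norm (f' (w t \<omega>)))\<^sup>2) \<in> borel_measurable M" if "t \<in> {1..T}" for t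
  proof -
    have [measurable]: "w t \<in> borel_measurable M" using that w_meas by auto
    show ?thesis by measurable
  qed
  have [measurable]: "(\<lambda>\<omega>. \<Sum>t=1..T. (norm (f' (w t \<omega>)))\<^sup>2) \<in> borel_measurable M"
    by (rule borel_measurable_sum) (rule m1)
  have s2: "{\<omega> \<in> space M. \<forall>t\<in>{1..T+1}. Dl t \<omega> \<le> FF} \<in> sets M"
  proof -
    have e: "{\<omega> \<in> space M. \<forall>t\<in>{1..T+1}. Dl t \<omega> \<le> FF}
        = space M \<inter> (\<Inter>t\<in>{1..T+1}. {\<omega> \<in> space M. Dl t \<omega> \<le> FF})" by auto
    have "{\<omega> \<in> space M. Dl t \<omega> \<le> FF} \<in> sets M" if t: "t \<in> {1..T+1}" for t
    proof -
      have [measurable]: "Dl t \<in> borel_measurable M" using t Dl_M[where n=t and t=t] by auto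
      show ?thesis by measurable
    qed
    then have "(\<Inter>t\<in>{1..T+1}. {\<omega> \<in> space M. Dl t \<omega> \<le> FF}) \<in> sets M"
      by (intro sets.finite_INT) auto
    then show ?thesis unfolding e by (intro sets.Int sets.top)
  qed
  have s1: "{\<omega> \<in> space M. (1 / real T) * (\<Sum>t=1..T. (norm (f' (w t \<omega>)))\<^sup>2)
             \<le> (\<beta> * \<alpha> + D1 / \<alpha>) * (2 * \<sigma>0 / sqrt (real T))
               + (8 * \<beta> * D1 * (1 + 4 * \<sigma>1\<^sup>2) * LL
                  + 24 * \<sigma>1\<^sup>2 * \<beta>\<^sup>2 * \<alpha>\<^sup>2 * ll
                  + 15 * \<sigma>0\<^sup>2 * ll) * (1 / real T)} \<in> sets M" by measurable
  have Tg_sets: "?Tg \<in> sets M"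
  proof -
    have "?Tg = {\<omega> \<in> space M. (1 / real T) * (\<Sum>t=1..T. (norm (f' (w t \<omega>)))\<^sup>2)
             \<le> (\<beta> * \<alpha> + D1 / \<alpha>) * (2 * \<sigma>0 / sqrt (real T))
               + (8 * \<beta> * D1 * (1 + 4 * \<sigma>1\<^sup>2) * LL
                  + 24 * \<sigma>1\<^sup>2 * \<beta>\<^sup>2 * \<alpha>\<^sup>2 * ll
                  + 15 * \<sigma>0\<^sup>2 * ll) * (1 / real T)} \<inter> {\<omega> \<in> space M. \<forall>t\<in>{1..T+1}. Dl t \<omega> \<le> FF}"
      unfolding Tg_alt by auto
    note e = this
    show ?thesis unfolding e by (rule sets.Int[OF s1 s2])
  qed
  define B1 where "B1 = (\<Union>k\<in>{2..Suc T}. {\<omega> \<in> space M. 7 * eta / 8 * (\<Sum>t\<in>{1..<k}. II t \<omega> * GG t \<omega>)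
      + eta\<^sup>2 * KK / (2 * (7 * eta / 8)) * ln (real T / \<delta>) < (\<Sum>t\<in>{1..<k}. Mp t \<omega>)})"
  define B2 where "B2 = {\<omega> \<in> space M. 3 * eta / 8 * (\<Sum>t\<in>{1..<Suc T}. II t \<omega> * GG t \<omega>)
      + eta\<^sup>2 * KK / (2 * (3 * eta / 8)) * ln (1 / \<delta>) < (\<Sum>t\<in>{1..<Suc T}. Mp t \<omega>)}"
  define B3 where "B3 = {\<omega> \<in> space M. \<not> noiseok \<omega>}"
  have B1k: "{\<omega> \<in> space M. 7 * eta / 8 * (\<Sum>t\<in>{1..<k}. II t \<omega> * GG t \<omega>)
      + eta\<^sup>2 * KK / (2 * (7 * eta / 8)) * ln (real T / \<delta>) < (\<Sum>t\<in>{1..<k}. Mp t \<omega>)} \<in> sets M" for k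
  proof -
    have [measurable]: "(\<lambda>\<omega>. \<Sum>t\<in>{1..<k}. Mp t \<omega>) \<in> borel_measurable M"
      "(\<lambda>\<omega>. \<Sum>t\<in>{1..<k}. II t \<omega> * GG t \<omega>) \<in> borel_measurable M" by (rule sums_M)+
    show ?thesis by measurable
  qed
  have B1s: "B1 \<in> sets M" unfolding B1_def
    by (rule sets.finite_UN) (simp, rule B1k)
  have B2s: "B2 \<in> sets M"
  proof -
    have [measurable]: "(\<lambda>\<omega>. \<Sum>t\<in>{1..<Suc T}. Mp t \<omega>) \<in> borel_measurable M"
      "(\<lambda>\<omega>. \<Sum>t\<in>{1..<Suc T}. II t \<omega> * GG t \<omega>) \<in> borel_measurable M" by (rule sums_M)+
    show ?thesis unfolding B2_def by measurable
  qed
  have B3s: "B3 \<in> sets M" unfolding B3_def by (rule nn_sets)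
  have Tpos: "real T > 0" using T1 by simp
  have mB1: "measure M B1 \<le> \<delta>"
  proof -
    have "measure M B1 \<le> (\<Sum>k\<in>{2..Suc T}. measure M {\<omega> \<in> space M. 7 * eta / 8 * (\<Sum>t\<in>{1..<k}. II t \<omega> * GG t \<omega>)
      + eta\<^sup>2 * KK / (2 * (7 * eta / 8)) * ln (real T / \<delta>) < (\<Sum>t\<in>{1..<k}. Mp t \<omega>)})"
      unfolding B1_def by (rule measure_UNION_le) (simp, rule B1k)
    also have "\<dots> \<le> (\<Sum>k\<in>{2..Suc T}. exp (- ln (real T / \<delta>)))"
      by (rule sum_mono, rule bad) (use eta_pos in auto)
    also have "\<dots> = real T * (\<delta> / real T)"
      using Tpos dpos by (simp add: exp_minus)
    also have "\<dots> = \<delta>" using Tpos by simp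
    finally show ?thesis .
  qed
  have mB2: "measure M B2 \<le> \<delta>"
  proof -
    have "measure M B2 \<le> exp (- ln (1 / \<delta>))"
      unfolding B2_def by (rule bad) (use eta_pos T1 in auto)
    also have "\<dots> = \<delta>" using dpos by (simp add: exp_minus)
    finally show ?thesis .
  qed
  have mB3: "measure M B3 = 0" unfolding B3_def by (rule noiseok_null)
  have sub: "space M - (B1 \<union> B2 \<union> B3) \<subseteq> ?Tg"
  proof
    fix \<omega> assume "\<omega> \<in> space M - (B1 \<union> B2 \<union> B3)"
    then have sp: "\<omega> \<in> space M" and n1: "\<omega> \<notin> B1" and n2: "\<omega> \<notin> B2" and n3: "\<omega> \<notin> B3" by auto
    have nk: "noiseok \<omega>" using n3 sp unfolding B3_def by blast
    have E1: "\<forall>k\<in>{2..Suc T}. (\<Sum>t\<in>{1..<k}. Mp t \<omega>) \<le> 7 * eta / 8 * (\<Sum>t\<in>{1..<k}. II t \<omega> * GG t \<omega>)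
               + eta\<^sup>2 * KK / (2 * (7 * eta / 8)) * ln (real T / \<delta>)"
    proof
      fix k assume k: "k \<in> {2..Suc T}"
      have "\<not> (7 * eta / 8 * (\<Sum>t\<in>{1..<k}. II t \<omega> * GG t \<omega>)
               + eta\<^sup>2 * KK / (2 * (7 * eta / 8)) * ln (real T / \<delta>) < (\<Sum>t\<in>{1..<k}. Mp t \<omega>))"
        using n1 sp k unfolding B1_def by blast
      then show "(\<Sum>t\<in>{1..<k}. Mp t \<omega>) \<le> 7 * eta / 8 * (\<Sum>t\<in>{1..<k}. II t \<omega> * GG t \<omega>)
               + eta\<^sup>2 * KK / (2 * (7 * eta / 8)) * ln (real T / \<delta>)" by (rule leI)
    qed
    have E2: "(\<Sum>t\<in>{1..<Suc T}. Mp t \<omega>) \<le> 3 * eta / 8 * (\<Sum>t\<in>{1..<Suc T}. II t \<omega> * GG t \<omega>)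
               + eta\<^sup>2 * KK / (2 * (3 * eta / 8)) * ln (1 / \<delta>)"
    proof (rule leI)
      show "\<not> (3 * eta / 8 * (\<Sum>t\<in>{1..<Suc T}. II t \<omega> * GG t \<omega>)
               + eta\<^sup>2 * KK / (2 * (3 * eta / 8)) * ln (1 / \<delta>) < (\<Sum>t\<in>{1..<Suc T}. Mp t \<omega>))"
        using n2 sp unfolding B2_def by blast
    qed
    have B: "\<forall>k\<in>{1..Suc T}. Dl k \<omega> \<le> FF" using bounded[OF nk E1] by blast
    have i: "(1 / real T) * (\<Sum>t=1..T. (norm (f' (w t \<omega>)))\<^sup>2)
             \<le> (\<beta> * \<alpha> + D1 / \<alpha>) * (2 * \<sigma>0 / sqrt (real T))
               + (8 * \<beta> * D1 * (1 + 4 * \<sigma>1\<^sup>2) * LL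
                  + 24 * \<sigma>1\<^sup>2 * \<beta>\<^sup>2 * \<alpha>\<^sup>2 * ll
                  + 15 * \<sigma>0\<^sup>2 * ll) * (1 / real T)"
      by (rule part_i[OF nk B E2])
    show "\<omega> \<in> ?Tg" unfolding Tg_alt using sp i B by simp
  qed
  have "1 - 2 * \<delta> \<le> 1 - measure M (B1 \<union> B2 \<union> B3)"
  proof -
    have "measure M (B1 \<union> B2 \<union> B3) \<le> measure M (B1 \<union> B2) + measure M B3"
      by (rule measure_Un_le) (use B1s B2s B3s in auto)
    also have "measure M (B1 \<union> B2) \<le> measure M B1 + measure M B2"
      by (rule measure_Un_le) (use B1s B2s in auto)
    finally show ?thesis using mB1 mB2 mB3 by linarith
  qed
  also have "\<dots> = measure M (space M - (B1 \<union> B2 \<union> B3))"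
    by (rule prob_compl[symmetric]) (use B1s B2s B3s in auto)
  also have "\<dots> \<le> measure M ?Tg"
    by (rule finite_measure_mono[OF sub Tg_sets])
  finally show ?thesis .
qed

end

theorem theorem5:
  fixes M :: "'m measure"
    and f :: "'a::euclidean_space \<Rightarrow> real" and f' :: "'a \<Rightarrow> 'a"
    and fstar \<beta> \<alpha> \<delta> \<sigma>0 \<sigma>1 :: real and T :: nat
    and w1 :: 'a and w g :: "nat \<Rightarrow> 'm \<Rightarrow> 'a"
  assumes "prob_space M"
    and grad: "\<And>x. (f has_derivative (\<lambda>h. f' x \<bullet> h)) (at x)"
    and "\<beta> > 0"
    and smooth: "\<And>x y. norm (f' x - f' y) \<le> \<beta> * norm (x - y)"
    and min_attained: "\<exists>x. f x = fstar" and min_le: "\<And>x. fstar \<le> f x"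
    and "\<alpha> > 0" and "0 < \<delta>" and "\<delta> < 1/2" and "T \<ge> 1"
    and "\<sigma>0 \<ge> 0" and "\<sigma>1 \<ge> 0"
    and init: "\<And>\<omega>. w 1 \<omega> = w1"
    and step: "\<And>t \<omega>. t \<ge> 1 \<Longrightarrow>
                 w (Suc t) \<omega> = w t \<omega> - sgd_eta \<beta> \<sigma>0 \<sigma>1 \<alpha> \<delta> T *\<^sub>R g t \<omega>"
    and meas: "\<And>t. g t \<in> borel_measurable M"
    and unbiased: "\<And>t b. 1 \<le> t \<Longrightarrow> t \<le> T \<Longrightarrow> b \<in> Basis \<Longrightarrow>
        AE \<omega> in M. real_cond_exp M (hist_alg M g t) (\<lambda>\<omega>. g t \<omega> \<bullet> b) \<omega> = f' (w t \<omega>) \<bullet> b"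
    and noise: "\<And>t. 1 \<le> t \<Longrightarrow> t \<le> T \<Longrightarrow>
        AE \<omega> in M. (norm (g t \<omega> - f' (w t \<omega>)))\<^sup>2 \<le> \<sigma>0\<^sup>2 + \<sigma>1\<^sup>2 * (norm (f' (w t \<omega>)))\<^sup>2"
  shows "measure M {\<omega> \<in> space M.
           (1 / real T) * (\<Sum>t=1..T. (norm (f' (w t \<omega>)))\<^sup>2)
             \<le> (\<beta> * \<alpha> + (f w1 - fstar) / \<alpha>) * (2 * \<sigma>0 / sqrt (real T))
               + (8 * \<beta> * (f w1 - fstar) * (1 + 4 * \<sigma>1\<^sup>2) * log 2 (real T / \<delta>)
                  + 24 * \<sigma>1\<^sup>2 * \<beta>\<^sup>2 * \<alpha>\<^sup>2 * log 2 (1 / \<delta>)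
                  + 15 * \<sigma>0\<^sup>2 * log 2 (1 / \<delta>)) * (1 / real T)
           \<and> (\<forall>t\<in>{1..T+1}. f (w t \<omega>) - fstar
                \<le> 2 * (f w1 - fstar) + 2 * \<beta> * \<alpha>\<^sup>2
                  + 3 * min (\<sigma>0\<^sup>2 / (4 * \<beta> * (1 + \<sigma>1\<^sup>2 * log 2 (real T / \<delta>))))
                            (\<sigma>0 * \<alpha> / sqrt (real T)) * log 2 (real T / \<delta>))}
         \<ge> 1 - 2 * \<delta>"
proof -
  interpret S: sgd M f f' fstar \<beta> \<alpha> \<delta> \<sigma>0 \<sigma>1 T w1 w g
    using assms by (intro sgd.intro) auto
  show ?thesis by (rule S.main)
qed

end
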